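(* Let $R$ be a commutative unital ring and $E$ an $R$-module. Then $\mathrm{Supp}_R(E)$ is Zariski closed in $\mathrm{Spec}(R)$ if and only if $\mathrm{Supp}_R(E)$ is pro-constructible. Moreover $\mathrm{Supp}_R(E)$ is Zariski closed in each of the following cases: (1) $\mathrm{Supp}_R(E)$ is finite; (2) $\mathrm{Ass}_R(E)$ is compact in the flat topology, for example if $\mathrm{Ass}_R(E)$ is pro-constructible, or finite, or closed; (3) $E$ has finite length; (4) $E$ is almost finitely generated over $R$; in this case $\mathrm V(\mathcal O_R(E))=\mathrm{Supp}_R(E)=\mathrm V(0:_RE)$ and $\mathcal O_R(E)=\sqrt{0:_RE}$.
   Context: $\mathrm{Supp}_R(E)=\{P\in\mathrm{Spec}(R)\mid E_P\neq0\}$; $\mathrm V(I)=\{P\mid I\subseteq P\}$. A subset of $\mathrm{Spec}(R)$ is pro-constructible if it is the image of $\mathrm{Spec}(T)\to\mathrm{Spec}(R)$ for some ring morphism $R\to T$. $\mathrm{Ass}_R(E)$ is the set of primes minimal among primes containing $0:_Rx$ for some $x\in E$. The flat topology on $\mathrm{Spec}(R)$ has as closed sets the images of spectra of flat $R$-algebras; the sets $\mathrm V(I)$ with $I$ finitely generated form a basis of its open sets; compactness does not require Hausdorffness. $E$ is almost finitely generated (afg) over $R$ if there is a ring morphism $R\to S$ such that $E$ is a finitely generated $S$-module whose induced $R$-module structure is the original one. $E_a$ is the localization at $\{a^n\}$ and $\mathcal O_R(E)=\{a\in R\mid E_a=0\}$. *)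

theory Defs
  imports "HOL-Algebra.Module" "HOL-Algebra.Ideal" "HOL-Algebra.RingHom" "HOL-Analysis.Analysis"
begin

definition Spec :: "('a, 'c) ring_scheme \<Rightarrow> 'a set set" where
  "Spec R = {P. primeideal P R}"

definition VV :: "('a, 'c) ring_scheme \<Rightarrow> 'a set \<Rightarrow> 'a set set" where
  "VV R I = {P \<in> Spec R. I \<subseteq> P}"

definition zariski_closed :: "('a, 'c) ring_scheme \<Rightarrow> 'a set set \<Rightarrow> bool" where
  "zariski_closed R S \<longleftrightarrow> (\<exists>I. ideal I R \<and> S = VV R I)"

definition spec_image :: "('a, 'c) ring_scheme \<Rightarrow> ('b, 'd) ring_scheme \<Rightarrow> ('a \<Rightarrow> 'b) \<Rightarrow> 'a set set" where
  "spec_image R T f = {{r \<in> carrier R. f r \<in> Q} | Q. Q \<in> Spec T}"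

text \<open>Pro-constructible, with the source ring T ranging over rings whose elements have type 'b.
  (Quantification over all types is not possible inside a HOL formula.)\<close>
definition pro_constructible :: "'b itself \<Rightarrow> ('a, 'c) ring_scheme \<Rightarrow> 'a set set \<Rightarrow> bool" where
  "pro_constructible (_ :: 'b itself) R S \<longleftrightarrow>
     (\<exists>(T :: 'b ring) f. cring T \<and> f \<in> ring_hom R T \<and> S = spec_image R T f)"

definition flat_topology :: "('a, 'c) ring_scheme \<Rightarrow> 'a set topology" where
  "flat_topology R = topology_generated_by
     {VV R (genideal R G) | G. finite G \<and> G \<subseteq> carrier R}"

text \<open>The relation defining the localization S^{-1}E (pairs (x,s) with x in E, s in S).\<close>
definition loc_rel :: "('a, 'c) ring_scheme \<Rightarrow> ('a, 'm, 'e) module_scheme \<Rightarrow> 'a set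
    \<Rightarrow> 'm \<times> 'a \<Rightarrow> 'm \<times> 'a \<Rightarrow> bool" where
  "loc_rel R E S p q \<longleftrightarrow>
     (\<exists>u\<in>S. u \<odot>\<^bsub>E\<^esub> ((snd q \<odot>\<^bsub>E\<^esub> fst p) \<ominus>\<^bsub>E\<^esub> (snd p \<odot>\<^bsub>E\<^esub> fst q)) = \<zero>\<^bsub>E\<^esub>)"

text \<open>S^{-1}E = 0: every fraction x/s equals the zero fraction 0/1.\<close>
definition loc_zero :: "('a, 'c) ring_scheme \<Rightarrow> ('a, 'm, 'e) module_scheme \<Rightarrow> 'a set \<Rightarrow> bool" where
  "loc_zero R E S \<longleftrightarrow>
     (\<forall>x\<in>carrier E. \<forall>s\<in>S. loc_rel R E S (x, s) (\<zero>\<^bsub>E\<^esub>, \<one>\<^bsub>R\<^esub>))"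

definition Supp :: "('a, 'c) ring_scheme \<Rightarrow> ('a, 'm, 'e) module_scheme \<Rightarrow> 'a set set" where
  "Supp R E = {P \<in> Spec R. \<not> loc_zero R E (carrier R - P)}"

text \<open>O_R(E) = {a | E_a = 0}, E_a the localization at {a^n}.\<close>
definition Obs :: "('a, 'c) ring_scheme \<Rightarrow> ('a, 'm, 'e) module_scheme \<Rightarrow> 'a set" where
  "Obs R E = {a \<in> carrier R. loc_zero R E {a [^]\<^bsub>R\<^esub> (n::nat) | n. True}}"

definition ann_elem :: "('a, 'c) ring_scheme \<Rightarrow> ('a, 'm, 'e) module_scheme \<Rightarrow> 'm \<Rightarrow> 'a set" where
  "ann_elem R E x = {r \<in> carrier R. r \<odot>\<^bsub>E\<^esub> x = \<zero>\<^bsub>E\<^esub>}"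

definition ann :: "('a, 'c) ring_scheme \<Rightarrow> ('a, 'm, 'e) module_scheme \<Rightarrow> 'a set" where
  "ann R E = {r \<in> carrier R. \<forall>x\<in>carrier E. r \<odot>\<^bsub>E\<^esub> x = \<zero>\<^bsub>E\<^esub>}"

definition radical :: "('a, 'c) ring_scheme \<Rightarrow> 'a set \<Rightarrow> 'a set" where
  "radical R I = {r \<in> carrier R. \<exists>n::nat. r [^]\<^bsub>R\<^esub> n \<in> I}"

definition Ass :: "('a, 'c) ring_scheme \<Rightarrow> ('a, 'm, 'e) module_scheme \<Rightarrow> 'a set set" where
  "Ass R E = {P \<in> Spec R. \<exists>x\<in>carrier E. ann_elem R E x \<subseteq> P \<and>
      (\<forall>Q\<in>Spec R. ann_elem R E x \<subseteq> Q \<and> Q \<subseteq> P \<longrightarrow> Q = P)}"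

definition finite_length :: "('a, 'c) ring_scheme \<Rightarrow> ('a, 'm, 'e) module_scheme \<Rightarrow> bool" where
  "finite_length R E \<longleftrightarrow> (\<exists>(n::nat) (M :: nat \<Rightarrow> 'm set).
     M 0 = {\<zero>\<^bsub>E\<^esub>} \<and> M n = carrier E \<and> (\<forall>i\<le>n. submodule (M i) R E) \<and>
     (\<forall>i<n. M i \<subset> M (Suc i) \<and>
        \<not> (\<exists>N. submodule N R E \<and> M i \<subset> N \<and> N \<subset> M (Suc i))))"

definition fin_gen :: "('a, 'c) ring_scheme \<Rightarrow> ('a, 'm, 'e) module_scheme \<Rightarrow> bool" where
  "fin_gen R E \<longleftrightarrow> (\<exists>G. finite G \<and> G \<subseteq> carrier E \<and>
     (\<forall>N. submodule N R E \<and> G \<subseteq> N \<longrightarrow> N = carrier E))"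

text \<open>E is afg over R via a (commutative) ring S whose elements have type 's.\<close>
definition afg :: "'s itself \<Rightarrow> ('a, 'c) ring_scheme \<Rightarrow> ('a, 'm, 'e) module_scheme \<Rightarrow> bool" where
  "afg (_ :: 's itself) R E \<longleftrightarrow>
     (\<exists>(S :: 's ring) (f :: 'a \<Rightarrow> 's) (F :: ('s, 'm) module).
        cring S \<and> f \<in> ring_hom R S \<and> Module.module S F \<and> fin_gen S F \<and>
        carrier F = carrier E \<and> add F = add E \<and> zero F = zero E \<and>
        (\<forall>r\<in>carrier R. \<forall>x\<in>carrier E. r \<odot>\<^bsub>E\<^esub> x = f r \<odot>\<^bsub>F\<^esub> x))"

end

theory Submission
  imports Defs "HOL-Algebra.Ring_Divisibility"
begin

context cring begin

lemma prime_one_notin: "primeideal P R \<Longrightarrow> \<one> \<notin> P"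
  using ideal.one_imp_carrier primeideal.I_notcarr primeideal.axioms(1) by blast

lemma prime_sub: assumes "primeideal P R" shows "P \<subseteq> carrier R"
proof -
  interpret primeideal P R by fact
  show ?thesis by (rule a_subset)
qed

lemma Spec_sub: "P \<in> Spec R \<Longrightarrow> P \<subseteq> carrier R"
  by (simp add: Spec_def prime_sub)

lemma prime_mult_notin:
  assumes "primeideal P R" "a \<in> carrier R" "b \<in> carrier R" "a \<notin> P" "b \<notin> P"
  shows "a \<otimes> b \<notin> P"
  using primeideal.I_prime[OF assms(1-3)] assms(4,5) by blast

lemma prod_avoid:
  assumes "finite A" "A \<subseteq> carrier R" "primeideal P R" "A \<inter> P = {}"
  shows "\<exists>b\<in>carrier R. b \<notin> P \<and> (\<forall>c\<in>A. \<forall>Q. ideal Q R \<and> c \<in> Q \<longrightarrow> b \<in> Q)"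
  using assms(1,2,4)
proof (induction A rule: finite_induct)
  case empty
  then show ?case using prime_one_notin[OF assms(3)] one_closed by blast
next
  case (insert c A)
  have "A \<subseteq> carrier R" "A \<inter> P = {}" using insert.prems by blast+
  then obtain b where b: "b \<in> carrier R" "b \<notin> P" "\<forall>c\<in>A. \<forall>Q. ideal Q R \<and> c \<in> Q \<longrightarrow> b \<in> Q"
    using insert.IH by blast
  have c: "c \<in> carrier R" "c \<notin> P" using insert.prems by auto
  have 1: "b \<otimes> c \<notin> P" using prime_mult_notin[OF assms(3) b(1) c(1) b(2) c(2)] .
  have 2: "b \<otimes> c \<in> Q" if "c' \<in> insert c A" "ideal Q R" "c' \<in> Q" for c' Q
  proof (cases "c' = c")
    case True
    then show ?thesis using ideal.I_l_closed[OF that(2), of c b] that b(1) by blast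
  next
    case False
    then have "b \<in> Q" using b(3) that by blast
    then show ?thesis using ideal.I_r_closed[OF that(2), of b c] c(1) by blast
  qed
  show ?case using 1 2 b(1) c(1) m_closed by blast
qed

lemma inter_ideal:
  assumes "S \<subseteq> Spec R"
  shows "ideal {r \<in> carrier R. \<forall>P\<in>S. r \<in> P} R"
proof (cases "S = {}")
  case True
  then show ?thesis using oneideal by simp
next
  case False
  have "{r \<in> carrier R. \<forall>P\<in>S. r \<in> P} = \<Inter>S"
  proof
    show "{r \<in> carrier R. \<forall>P\<in>S. r \<in> P} \<subseteq> \<Inter>S" by blast
    show "\<Inter>S \<subseteq> {r \<in> carrier R. \<forall>P\<in>S. r \<in> P}"
    proof
      fix x assume x: "x \<in> \<Inter>S"
      obtain P where P: "P \<in> S" using False by blast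
      then have "x \<in> carrier R" using x Spec_sub[of P] assms by blast
      then show "x \<in> {r \<in> carrier R. \<forall>P\<in>S. r \<in> P}" using x by blast
    qed
  qed
  moreover have "ideal (\<Inter>S) R"
    by (rule i_Intersect) (use assms False in \<open>auto simp: Spec_def primeideal_def\<close>)
  ultimately show ?thesis by simp
qed

lemma closed_criterion:
  assumes "S \<subseteq> Spec R"
    and "\<And>P. P \<in> Spec R \<Longrightarrow> {r \<in> carrier R. \<forall>P'\<in>S. r \<in> P'} \<subseteq> P \<Longrightarrow> P \<in> S"
  shows "zariski_closed R S"
  unfolding zariski_closed_def
proof (intro exI conjI)
  show "ideal {r \<in> carrier R. \<forall>P\<in>S. r \<in> P} R" by (rule inter_ideal[OF assms(1)])
  show "S = VV R {r \<in> carrier R. \<forall>P\<in>S. r \<in> P}"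
  proof (intro equalityI subsetI)
    fix P assume "P \<in> S" then show "P \<in> VV R {r \<in> carrier R. \<forall>P\<in>S. r \<in> P}"
      unfolding VV_def using assms(1) by blast
  next
    fix P assume "P \<in> VV R {r \<in> carrier R. \<forall>P\<in>S. r \<in> P}"
    then have "P \<in> Spec R" "{r \<in> carrier R. \<forall>P\<in>S. r \<in> P} \<subseteq> P" unfolding VV_def by blast+
    then show "P \<in> S" by (rule assms(2))
  qed
qed

lemma chain_inter_prime:
  assumes "D \<noteq> {}" "D \<subseteq> Spec R" "\<And>X Y. X \<in> D \<Longrightarrow> Y \<in> D \<Longrightarrow> X \<subseteq> Y \<or> Y \<subseteq> X"
  shows "\<Inter>D \<in> Spec R"
proof -
  have pr: "primeideal Q R" if "Q \<in> D" for Q using that assms(2) unfolding Spec_def by blast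
  have "primeideal (\<Inter>D) R"
  proof (rule primeidealI)
    have idl: "ideal Q R" if "Q \<in> D" for Q using pr[OF that] by (rule primeideal.axioms(1))
    show "ideal (\<Inter>D) R"
      by (rule i_Intersect) (use idl assms(1) in auto)
    show "cring R" by (rule is_cring)
    obtain Q where "Q \<in> D" using assms(1) by blast
    then have "\<one> \<notin> \<Inter>D" using pr prime_one_notin by blast
    then show "carrier R \<noteq> \<Inter>D" using one_closed by blast
  next
    fix a b assume ab: "a \<in> carrier R" "b \<in> carrier R" "a \<otimes> b \<in> \<Inter>D"
    show "a \<in> \<Inter>D \<or> b \<in> \<Inter>D"
    proof (rule ccontr)
      assume "\<not> (a \<in> \<Inter>D \<or> b \<in> \<Inter>D)"
      then obtain Q1 Q2 where q: "Q1 \<in> D" "Q2 \<in> D" "a \<notin> Q1" "b \<notin> Q2" by blast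
      show False
      proof (cases "Q1 \<subseteq> Q2")
        case True
        then have "b \<notin> Q1" using q by blast
        then show False using prime_mult_notin[OF pr[OF q(1)] ab(1,2) q(3)] ab(3) q(1) by blast
      next
        case False
        then have "Q2 \<subseteq> Q1" using assms(3) q by blast
        then have "a \<notin> Q2" using q by blast
        then show False using prime_mult_notin[OF pr[OF q(2)] ab(1,2) _ q(4)] ab(3) q(2) by blast
      qed
    qed
  qed
  then show ?thesis unfolding Spec_def by simp
qed

lemma minimal_prime_below:
  assumes "P \<in> Spec R" "J \<subseteq> P"
  shows "\<exists>Q\<in>Spec R. J \<subseteq> Q \<and> Q \<subseteq> P \<and> (\<forall>Q'\<in>Spec R. J \<subseteq> Q' \<and> Q' \<subseteq> Q \<longrightarrow> Q' = Q)"
proof -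
  define A where "A = {Q. Q \<in> Spec R \<and> J \<subseteq> Q \<and> Q \<subseteq> P}"
  define A' where "A' = uminus ` A"
  have "\<exists>M\<in>A'. \<forall>X\<in>A'. M \<subseteq> X \<longrightarrow> X = M"
  proof (rule subset_Zorn)
    fix C assume ch: "subset.chain A' C"
    show "\<exists>U\<in>A'. \<forall>X\<in>C. X \<subseteq> U"
    proof (cases "C = {}")
      case True
      have "P \<in> A" using assms unfolding A_def by blast
      then show ?thesis using True unfolding A'_def by blast
    next
      case False
      define D where "D = uminus ` C"
      have CA: "C \<subseteq> A'" using ch unfolding subset.chain_def by blast
      have DA: "D \<subseteq> A" unfolding D_def using CA unfolding A'_def by auto
      have Dne: "D \<noteq> {}" using False unfolding D_def by blast
      have Dch: "X \<subseteq> Y \<or> Y \<subseteq> X" if xy: "X \<in> D" "Y \<in> D" for X Y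
      proof -
        obtain X' where X': "X = - X'" "X' \<in> C" using xy(1) unfolding D_def by (rule imageE)
        obtain Y' where Y': "Y = - Y'" "Y' \<in> C" using xy(2) unfolding D_def by (rule imageE)
        have "X' \<subseteq> Y' \<or> Y' \<subseteq> X'" using ch X'(2) Y'(2) unfolding subset.chain_def by blast
        then show ?thesis using X'(1) Y'(1) by blast
      qed
      have "\<Inter>D \<in> Spec R" by (rule chain_inter_prime[OF Dne _ Dch]) (use DA in \<open>auto simp: A_def\<close>)
      moreover have "J \<subseteq> \<Inter>D" "\<Inter>D \<subseteq> P" using DA Dne unfolding A_def by blast+
      ultimately have "\<Inter>D \<in> A" unfolding A_def by blast
      then have "- \<Inter>D \<in> A'" unfolding A'_def by blast
      moreover have "X \<subseteq> - \<Inter>D" if "X \<in> C" for X using that unfolding D_def by blast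
      ultimately show ?thesis by blast
    qed
  qed
  then obtain M where M: "M \<in> A'" "\<And>X. X \<in> A' \<Longrightarrow> M \<subseteq> X \<Longrightarrow> X = M" by blast
  then obtain Q where Q: "Q \<in> A" "M = - Q" unfolding A'_def by blast
  have "Q' = Q" if "Q' \<in> Spec R" "J \<subseteq> Q'" "Q' \<subseteq> Q" for Q'
  proof -
    have "Q' \<in> A" using that Q unfolding A_def by blast
    then have "- Q' \<in> A'" unfolding A'_def by blast
    moreover have "M \<subseteq> - Q'" using Q that by blast
    ultimately have "- Q' = M" using M by blast
    then show ?thesis using Q by (metis double_complement)
  qed
  then show ?thesis using Q unfolding A_def by blast
qed

end
context Module.module begin
lemma minus_zero_M: "x \<in> carrier M \<Longrightarrow> x \<ominus>\<^bsub>M\<^esub> \<zero>\<^bsub>M\<^esub> = x"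
  by (simp add: a_minus_def a_inv_def)

lemma loc_zero_iff:
  assumes "S \<subseteq> carrier R" "S \<noteq> {}"
  shows "loc_zero R M S \<longleftrightarrow> (\<forall>x\<in>carrier M. \<exists>u\<in>S. u \<odot>\<^bsub>M\<^esub> x = \<zero>\<^bsub>M\<^esub>)"
proof -
  have e: "loc_rel R M S (x, s) (\<zero>\<^bsub>M\<^esub>, \<one>) \<longleftrightarrow> (\<exists>u\<in>S. u \<odot>\<^bsub>M\<^esub> x = \<zero>\<^bsub>M\<^esub>)"
    if "x \<in> carrier M" "s \<in> S" for s x
  proof -
    have "s \<in> carrier R" using that assms by blast
    then have "(\<one> \<odot>\<^bsub>M\<^esub> x) \<ominus>\<^bsub>M\<^esub> (s \<odot>\<^bsub>M\<^esub> \<zero>\<^bsub>M\<^esub>) = x"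
      using that by (simp add: minus_zero_M)
    then show ?thesis unfolding loc_rel_def by simp
  qed
  show ?thesis unfolding loc_zero_def
  proof
    assume "\<forall>x\<in>carrier M. \<forall>s\<in>S. loc_rel R M S (x, s) (\<zero>\<^bsub>M\<^esub>, \<one>)"
    then show "\<forall>x\<in>carrier M. \<exists>u\<in>S. u \<odot>\<^bsub>M\<^esub> x = \<zero>\<^bsub>M\<^esub>" using e assms(2) by blast
  next
    assume "\<forall>x\<in>carrier M. \<exists>u\<in>S. u \<odot>\<^bsub>M\<^esub> x = \<zero>\<^bsub>M\<^esub>"
    then show "\<forall>x\<in>carrier M. \<forall>s\<in>S. loc_rel R M S (x, s) (\<zero>\<^bsub>M\<^esub>, \<one>)" using e by blast
  qed
qed
end

context cring begin

lemma prime_avoid_mult: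
  assumes U: "U \<subseteq> carrier R" "\<one> \<in> U" "\<And>a b. a \<in> U \<Longrightarrow> b \<in> U \<Longrightarrow> a \<otimes> b \<in> U" "\<zero> \<notin> U"
  shows "\<exists>Q\<in>Spec R. Q \<inter> U = {}"
proof -
  define A where "A = {I. ideal I R \<and> I \<inter> U = {}}"
  have "\<exists>M\<in>A. \<forall>X\<in>A. M \<subseteq> X \<longrightarrow> X = M"
  proof (rule subset_Zorn_nonempty)
    show "A \<noteq> {}" using zeroideal U(4) unfolding A_def by blast
    fix C assume C: "C \<noteq> {}" "subset.chain A C"
    have "subset.chain {I. ideal I R} C" using C(2) unfolding A_def subset.chain_def by blast
    from chain_Union_is_ideal[OF this] have "ideal (\<Union>C) R" using C(1) by simp
    moreover have "\<Union>C \<inter> U = {}" using C(2) unfolding A_def subset.chain_def by blast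
    ultimately show "\<Union>C \<in> A" unfolding A_def by blast
  qed
  then obtain M where MA: "M \<in> A" and Mmax: "\<forall>X\<in>A. M \<subseteq> X \<longrightarrow> X = M" by blast
  have M12: "ideal M R" "M \<inter> U = {}" using MA unfolding A_def by simp_all
  have M3: "X = M" if "ideal X R" "X \<inter> U = {}" "M \<subseteq> X" for X
  proof -
    have "X \<in> A" using that(1,2) unfolding A_def by simp
    then show ?thesis using Mmax that(3) by blast
  qed
  note M = M12 M3
  interpret M: ideal M R by (rule M(1))
  have ext: "\<exists>m\<in>M. \<exists>x\<in>carrier R. m \<oplus> x \<otimes> a \<in> U" if a: "a \<in> carrier R" "a \<notin> M" for a
  proof -
    let ?N = "set_add R M (PIdl a)"
    have N: "ideal ?N R" using add_ideals[OF M(1) cgenideal_ideal[OF a(1)]] .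
    have mem: "h \<oplus> x \<otimes> a \<in> ?N" if "h \<in> M" "x \<in> carrier R" for h x
      using that unfolding set_add_def' cgenideal_def by blast
    have "M \<subseteq> ?N"
    proof
      fix h assume h: "h \<in> M"
      then have "h = h \<oplus> \<zero> \<otimes> a" using a(1) M.Icarr[OF h] by simp
      then show "h \<in> ?N" using mem[OF h zero_closed] by simp
    qed
    moreover have "a \<in> ?N" using mem[OF M.zero_closed one_closed] a(1) by simp
    ultimately have "?N \<inter> U \<noteq> {}" using M(3)[OF N] a(2) by blast
    then obtain u where u: "u \<in> ?N" "u \<in> U" by blast
    then obtain m k where mk: "m \<in> M" "k \<in> PIdl a" "u = m \<oplus> k" unfolding set_add_def' by blast
    then obtain x where "x \<in> carrier R" "k = x \<otimes> a" unfolding cgenideal_def by blast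
    then show ?thesis using mk u by blast
  qed
  have "primeideal M R"
  proof (rule primeidealI[OF M(1) is_cring])
    show "carrier R \<noteq> M" using U(2) M(2) one_closed by blast
  next
    fix a b assume ab: "a \<in> carrier R" "b \<in> carrier R" "a \<otimes> b \<in> M"
    show "a \<in> M \<or> b \<in> M"
    proof (rule ccontr)
      assume "\<not> (a \<in> M \<or> b \<in> M)"
      then have nab: "a \<notin> M" "b \<notin> M" by simp_all
      obtain m1 x1 where e1: "m1 \<in> M" "x1 \<in> carrier R" "m1 \<oplus> x1 \<otimes> a \<in> U"
        using ext[OF ab(1) nab(1)] by blast
      obtain m2 x2 where e2: "m2 \<in> M" "x2 \<in> carrier R" "m2 \<oplus> x2 \<otimes> b \<in> U"
        using ext[OF ab(2) nab(2)] by blast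
      note e = e1 e2
      have c: "m1 \<in> carrier R" "m2 \<in> carrier R" using e M.Icarr by blast+
      let ?u1 = "m1 \<oplus> x1 \<otimes> a" and ?u2 = "m2 \<oplus> x2 \<otimes> b"
      have u2c: "?u2 \<in> carrier R" using c e ab by simp
      have "?u1 \<otimes> ?u2 = m1 \<otimes> ?u2 \<oplus> (x1 \<otimes> a) \<otimes> ?u2"
        using c e ab u2c by (simp add: l_distr)
      also have "(x1 \<otimes> a) \<otimes> ?u2 = (x1 \<otimes> a) \<otimes> m2 \<oplus> (x1 \<otimes> a) \<otimes> (x2 \<otimes> b)"
        using c e ab by (simp add: r_distr)
      also have "(x1 \<otimes> a) \<otimes> (x2 \<otimes> b) = (x1 \<otimes> x2) \<otimes> (a \<otimes> b)"
        using e ab by (simp add: m_ac)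
      finally have eq: "?u1 \<otimes> ?u2 = m1 \<otimes> ?u2 \<oplus> ((x1 \<otimes> a) \<otimes> m2 \<oplus> (x1 \<otimes> x2) \<otimes> (a \<otimes> b))" .
      have "m1 \<otimes> ?u2 \<in> M" using M.I_r_closed[OF e(1) u2c] .
      moreover have "(x1 \<otimes> a) \<otimes> m2 \<in> M" using M.I_l_closed[OF e(4)] e ab by simp
      moreover have "(x1 \<otimes> x2) \<otimes> (a \<otimes> b) \<in> M" using M.I_l_closed[OF ab(3)] e by simp
      ultimately have "?u1 \<otimes> ?u2 \<in> M" unfolding eq by (simp add: M.a_closed)
      moreover have "?u1 \<otimes> ?u2 \<in> U" using U(3) e by blast
      ultimately show False using M(2) by blast
    qed
  qed
  then show ?thesis using M(2) unfolding Spec_def by blast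
qed

end

context cring begin
lemma Spec_ideal: "P \<in> Spec R \<Longrightarrow> ideal P R"
  unfolding Spec_def by (simp add: primeideal.axioms(1))
lemma Spec_prime: "P \<in> Spec R \<Longrightarrow> primeideal P R"
  unfolding Spec_def by simp
lemma Spec_zero: "P \<in> Spec R \<Longrightarrow> \<zero> \<in> P"
  using Spec_ideal additive_subgroup.zero_closed ideal.axioms(1) by metis
end

context Module.module begin

lemma Supp_Spec_ne: "P \<in> Spec R \<Longrightarrow> carrier R - P \<noteq> {}"
  using Spec_prime prime_one_notin R.one_closed by blast

lemma Supp_iff: "P \<in> Supp R M \<longleftrightarrow> P \<in> Spec R \<and> (\<exists>x\<in>carrier M. ann_elem R M x \<subseteq> P)"
proof (cases "P \<in> Spec R")
  case True
  have ne: "carrier R - P \<noteq> {}" using Supp_Spec_ne[OF True] .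
  have 1: "loc_zero R M (carrier R - P) \<longleftrightarrow> (\<forall>x\<in>carrier M. \<exists>u\<in>carrier R - P. u \<odot>\<^bsub>M\<^esub> x = \<zero>\<^bsub>M\<^esub>)"
    by (rule loc_zero_iff) (use ne in auto)
  have 2: "(\<exists>u\<in>carrier R - P. u \<odot>\<^bsub>M\<^esub> x = \<zero>\<^bsub>M\<^esub>) \<longleftrightarrow> \<not> ann_elem R M x \<subseteq> P" for x
      unfolding ann_elem_def by blast
  have 3: "P \<in> Supp R M \<longleftrightarrow> \<not> loc_zero R M (carrier R - P)" using True unfolding Supp_def by blast
  show ?thesis using 1 2 3 True by blast
next
  case False
  then show ?thesis unfolding Supp_def by blast
qed

lemma Supp_Spec: "Supp R M \<subseteq> Spec R"
  unfolding Supp_def by blast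

lemma Supp_up:
  assumes "P \<in> Supp R M" "Q \<in> Spec R" "P \<subseteq> Q"
  shows "Q \<in> Supp R M"
proof -
  obtain x where "x \<in> carrier M" "ann_elem R M x \<subseteq> P" using assms(1) Supp_iff by blast
  then show ?thesis using Supp_iff assms(2,3) by blast
qed

lemma Ass_Spec: "Ass R M \<subseteq> Spec R"
  unfolding Ass_def by blast

lemma Ass_Supp_up:
  assumes "Q \<in> Ass R M" "P \<in> Spec R" "Q \<subseteq> P"
  shows "P \<in> Supp R M"
proof -
  obtain x where "x \<in> carrier M" "ann_elem R M x \<subseteq> Q" using assms(1) unfolding Ass_def by blast
  then show ?thesis using Supp_iff assms(2,3) by blast
qed

lemma Supp_Ass_below:
  assumes "P \<in> Supp R M"
  shows "\<exists>Q\<in>Ass R M. Q \<subseteq> P"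
proof -
  obtain x where x: "x \<in> carrier M" "ann_elem R M x \<subseteq> P" and P: "P \<in> Spec R"
    using assms Supp_iff by blast
  obtain Q where Q: "Q \<in> Spec R" "ann_elem R M x \<subseteq> Q" "Q \<subseteq> P"
    "\<forall>Q'\<in>Spec R. ann_elem R M x \<subseteq> Q' \<and> Q' \<subseteq> Q \<longrightarrow> Q' = Q"
    using minimal_prime_below[OF P x(2)] by blast
  have "Q \<in> Ass R M" unfolding Ass_def using Q x(1) by blast
  then show ?thesis using Q(3) by blast
qed

lemma finite_Supp_closed:
  assumes "finite (Supp R M)"
  shows "zariski_closed R (Supp R M)"
proof (rule closed_criterion[OF Supp_Spec])
  fix P assume P: "P \<in> Spec R" and I: "{r \<in> carrier R. \<forall>P'\<in>Supp R M. r \<in> P'} \<subseteq> P"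
  show "P \<in> Supp R M"
  proof (rule ccontr)
    assume nP: "P \<notin> Supp R M"
    have ex: "\<exists>a. a \<in> P' \<and> a \<notin> P" if "P' \<in> Supp R M" for P'
    proof (rule ccontr)
      assume "\<nexists>a. a \<in> P' \<and> a \<notin> P" then have "P' \<subseteq> P" by blast
      then show False using Supp_up[OF that P] nP by blast
    qed
    define g where "g P' = (SOME a. a \<in> P' \<and> a \<notin> P)" for P'
    have g: "g P' \<in> P' \<and> g P' \<notin> P" if "P' \<in> Supp R M" for P'
      using someI_ex[OF ex[OF that]] unfolding g_def .
    have Ac: "g ` Supp R M \<subseteq> carrier R"
    proof
      fix a assume "a \<in> g ` Supp R M"
      then obtain P' where "P' \<in> Supp R M" "a = g P'" by blast
      then show "a \<in> carrier R" using g Supp_Spec Spec_sub by blast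
    qed
    have AP: "g ` Supp R M \<inter> P = {}" using g by blast
    have pr: "primeideal P R" using P by (rule Spec_prime)
    obtain b where b: "b \<in> carrier R" "b \<notin> P" "\<forall>c\<in>g ` Supp R M. \<forall>Q. ideal Q R \<and> c \<in> Q \<longrightarrow> b \<in> Q"
      using prod_avoid[OF finite_imageI[OF assms] Ac pr AP] by blast
    have "b \<in> P'" if "P' \<in> Supp R M" for P'
    proof -
      have "ideal P' R" using that Supp_Spec Spec_ideal by blast
      then show ?thesis using b(3) g[OF that] that by blast
    qed
    then have "b \<in> P" using I b(1) by blast
    then show False using b(2) by blast
  qed
qed

lemma image_Supp_closed:
  fixes T :: "('x, 'y) ring_scheme"
  assumes T: "cring T" and f: "f \<in> ring_hom R T" and eq: "Supp R M = spec_image R T f"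
  shows "zariski_closed R (Supp R M)"
proof (rule closed_criterion[OF Supp_Spec])
  fix P assume P: "P \<in> Spec R" and I: "{r \<in> carrier R. \<forall>P'\<in>Supp R M. r \<in> P'} \<subseteq> P"
  have pr: "primeideal P R" using P by (rule Spec_prime)
  show "P \<in> Supp R M"
  proof (cases "\<exists>Q\<in>Spec T. \<forall>s\<in>carrier R - P. f s \<notin> Q")
    case True
    then obtain Q where Q: "Q \<in> Spec T" "\<forall>s\<in>carrier R - P. f s \<notin> Q" by blast
    let ?C = "{r \<in> carrier R. f r \<in> Q}"
    have "?C \<in> Supp R M" unfolding eq spec_image_def using Q(1) by blast
    moreover have "?C \<subseteq> P" using Q(2) by blast
    ultimately show ?thesis using Supp_up P by blast
  next
    case False
    let ?U = "f ` (carrier R - P)"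
    have U1: "?U \<subseteq> carrier T" using ring_hom_closed[OF f] by blast
    have "\<one> \<in> carrier R - P" using prime_one_notin[OF pr] R.one_closed by blast
    then have U2: "\<one>\<^bsub>T\<^esub> \<in> ?U" using ring_hom_one[OF f] by force
    have U3: "a \<otimes>\<^bsub>T\<^esub> b \<in> ?U" if ab: "a \<in> ?U" "b \<in> ?U" for a b
    proof -
      obtain s where s: "s \<in> carrier R - P" "a = f s" using ab(1) by blast
      obtain t where t: "t \<in> carrier R - P" "b = f t" using ab(2) by blast
      have "s \<otimes> t \<notin> P" using prime_mult_notin[OF pr] s t by blast
      then have "s \<otimes> t \<in> carrier R - P" using s t by simp
      moreover have "a \<otimes>\<^bsub>T\<^esub> b = f (s \<otimes> t)" using ring_hom_mult[OF f] s t by simp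
      ultimately show ?thesis by blast
    qed
    have "\<zero>\<^bsub>T\<^esub> \<in> ?U"
    proof (rule ccontr)
      assume "\<zero>\<^bsub>T\<^esub> \<notin> ?U"
      from cring.prime_avoid_mult[OF T U1 U2 U3 this] obtain Q where "Q \<in> Spec T" "Q \<inter> ?U = {}" by blast
      then show False using False by blast
    qed
    then obtain s0 where s0: "\<zero>\<^bsub>T\<^esub> = f s0" "s0 \<in> carrier R - P" by (rule imageE)
    obtain s where s: "s \<in> carrier R" "s \<notin> P" "f s = \<zero>\<^bsub>T\<^esub>"
      using s0 by (intro that[of s0]) auto
    have "s \<in> P'" if hP: "P' \<in> Supp R M" for P'
    proof -
      obtain Q where Q: "Q \<in> Spec T" "P' = {r \<in> carrier R. f r \<in> Q}"
        using hP unfolding eq spec_image_def by blast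
      have "\<zero>\<^bsub>T\<^esub> \<in> Q" using cring.Spec_zero[OF T Q(1)] .
      then show ?thesis using Q s by simp
    qed
    then have "s \<in> P" using I s(1) by blast
    then show ?thesis using s(2) by blast
  qed
qed

end

definition fipX :: "'a set \<Rightarrow> 'a set set \<Rightarrow> bool" where
  "fipX X \<M> \<longleftrightarrow> (\<forall>F. finite F \<and> F \<subseteq> \<M> \<longrightarrow> (\<exists>x\<in>X. \<forall>A\<in>F. x \<in> A))"

lemma fipX_D: "fipX X \<M> \<Longrightarrow> finite F \<Longrightarrow> F \<subseteq> \<M> \<Longrightarrow> \<exists>x\<in>X. \<forall>A\<in>F. x \<in> A"
  unfolding fipX_def by blast

lemma max_fip:
  assumes "fipX X D"
  shows "\<exists>\<M>. D \<subseteq> \<M> \<and> fipX X \<M> \<and> (\<forall>A. fipX X (insert A \<M>) \<longrightarrow> A \<in> \<M>)"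
proof -
  define \<A> where "\<A> = {\<M>. D \<subseteq> \<M> \<and> fipX X \<M>}"
  have "\<exists>M\<in>\<A>. \<forall>Y\<in>\<A>. M \<subseteq> Y \<longrightarrow> Y = M"
  proof (rule subset_Zorn_nonempty)
    show "\<A> \<noteq> {}" using assms unfolding \<A>_def by blast
    fix C assume C: "C \<noteq> {}" "subset.chain \<A> C"
    have CA: "C \<subseteq> \<A>" using C(2) unfolding subset.chain_def by blast
    obtain M0 where M0: "M0 \<in> C" using C(1) by blast
    have "D \<subseteq> M0" using CA M0 unfolding \<A>_def by blast
    then have "D \<subseteq> \<Union>C" using M0 by blast
    moreover have "fipX X (\<Union>C)"
      unfolding fipX_def
    proof (intro allI impI)
      fix F assume F: "finite F \<and> F \<subseteq> \<Union>C"
      obtain B where B: "B \<in> C" "F \<subseteq> B"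
        using finite_subset_Union_chain[of F C \<A>] F C by blast
      have "fipX X B" using B(1) CA unfolding \<A>_def by blast
      then show "\<exists>x\<in>X. \<forall>A\<in>F. x \<in> A" using fipX_D F B(2) by blast
    qed
    ultimately show "\<Union>C \<in> \<A>" unfolding \<A>_def by blast
  qed
  then obtain M where MA: "M \<in> \<A>" and Mmax: "\<forall>Y\<in>\<A>. M \<subseteq> Y \<longrightarrow> Y = M" by blast
  have "A \<in> M" if "fipX X (insert A M)" for A
  proof -
    have "insert A M \<in> \<A>" using that MA unfolding \<A>_def by blast
    then have "insert A M = M" using Mmax by blast
    then show ?thesis by blast
  qed
  then show ?thesis using MA unfolding \<A>_def by blast
qed

locale maxfip =
  fixes X :: "'a set" and M :: "'a set set"
  assumes fip: "fipX X M" and maxi: "\<And>A. fipX X (insert A M) \<Longrightarrow> A \<in> M"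
begin

lemma inter_in: assumes "A \<in> M" "B \<in> M" shows "A \<inter> B \<in> M"
proof (rule maxi)
  show "fipX X (insert (A \<inter> B) M)" unfolding fipX_def
  proof (intro allI impI)
    fix F assume F: "finite F \<and> F \<subseteq> insert (A \<inter> B) M"
    let ?F = "insert A (insert B (F - {A \<inter> B}))"
    have "finite ?F" "?F \<subseteq> M" using F assms by auto
    then obtain x where x: "x \<in> X" "\<forall>C\<in>?F. x \<in> C" using fipX_D[OF fip] by blast
    have "\<forall>C\<in>F. x \<in> C"
    proof
      fix C assume "C \<in> F"
      then show "x \<in> C" using x(2) by (cases "C = A \<inter> B") auto
    qed
    then show "\<exists>x\<in>X. \<forall>C\<in>F. x \<in> C" using x(1) by blast
  qed
qed

lemma super_in: assumes "A \<in> M" "A \<inter> X \<subseteq> B" shows "B \<in> M"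
proof (rule maxi)
  show "fipX X (insert B M)" unfolding fipX_def
  proof (intro allI impI)
    fix F assume F: "finite F \<and> F \<subseteq> insert B M"
    let ?F = "insert A (F - {B})"
    have "finite ?F" "?F \<subseteq> M" using F assms by auto
    then obtain x where x: "x \<in> X" "\<forall>C\<in>?F. x \<in> C" using fipX_D[OF fip] by blast
    have "x \<in> B" using x assms(2) by blast
    then have "\<forall>C\<in>F. x \<in> C" using x(2) by blast
    then show "\<exists>x\<in>X. \<forall>C\<in>F. x \<in> C" using x(1) by blast
  qed
qed

lemma X_in: "X \<in> M"
proof (rule maxi)
  show "fipX X (insert X M)" unfolding fipX_def
  proof (intro allI impI)
    fix F assume F: "finite F \<and> F \<subseteq> insert X M"
    have "finite (F - {X})" "F - {X} \<subseteq> M" using F by auto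
    then obtain x where x: "x \<in> X" "\<forall>C\<in>F - {X}. x \<in> C" using fipX_D[OF fip] by blast
    then have "\<forall>C\<in>F. x \<in> C" by blast
    then show "\<exists>x\<in>X. \<forall>C\<in>F. x \<in> C" using x(1) by blast
  qed
qed

lemma nonempty_in: assumes "A \<in> M" shows "\<exists>x\<in>X. x \<in> A"
proof -
  have "finite {A}" "{A} \<subseteq> M" using assms by auto
  then show ?thesis using fipX_D[OF fip] by blast
qed

lemma union_in: assumes "A \<union> B \<in> M" shows "A \<in> M \<or> B \<in> M"
proof (rule ccontr)
  assume "\<not> (A \<in> M \<or> B \<in> M)"
  then have nA: "\<not> fipX X (insert A M)" and nB: "\<not> fipX X (insert B M)" using maxi by blast+
  obtain F1 where F1: "finite F1" "F1 \<subseteq> insert A M" "\<forall>x\<in>X. \<exists>C\<in>F1. x \<notin> C"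
    using nA unfolding fipX_def by auto
  obtain F2 where F2: "finite F2" "F2 \<subseteq> insert B M" "\<forall>x\<in>X. \<exists>C\<in>F2. x \<notin> C"
    using nB unfolding fipX_def by auto
  let ?F = "insert (A \<union> B) ((F1 - {A}) \<union> (F2 - {B}))"
  have "finite ?F" "?F \<subseteq> M" using F1 F2 assms by auto
  then obtain x where x: "x \<in> X" "\<forall>C\<in>?F. x \<in> C" using fipX_D[OF fip] by blast
  have "x \<in> A \<or> x \<in> B" using x(2) by simp
  then show False
  proof
    assume "x \<in> A"
    then have "\<forall>C\<in>F1. x \<in> C" using x(2) by auto
    then show False using F1(3) x(1) by blast
  next
    assume "x \<in> B"
    then have "\<forall>C\<in>F2. x \<in> C" using x(2) by auto
    then show False using F2(3) x(1) by blast
  qed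
qed

end

context cring begin

lemma Spec_add: "P \<in> Spec R \<Longrightarrow> a \<in> P \<Longrightarrow> b \<in> P \<Longrightarrow> a \<oplus> b \<in> P"
  using Spec_ideal additive_subgroup.a_closed ideal.axioms(1) by metis
lemma Spec_neg: "P \<in> Spec R \<Longrightarrow> a \<in> P \<Longrightarrow> \<ominus> a \<in> P"
  using Spec_ideal additive_subgroup.a_inv_closed ideal.axioms(1) by metis
lemma Spec_lmult: "P \<in> Spec R \<Longrightarrow> a \<in> P \<Longrightarrow> x \<in> carrier R \<Longrightarrow> x \<otimes> a \<in> P"
  using Spec_ideal ideal.I_l_closed by metis
lemma Spec_rmult: "P \<in> Spec R \<Longrightarrow> a \<in> P \<Longrightarrow> x \<in> carrier R \<Longrightarrow> a \<otimes> x \<in> P"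
  using Spec_ideal ideal.I_r_closed by metis
lemma Spec_primemem: "P \<in> Spec R \<Longrightarrow> a \<in> carrier R \<Longrightarrow> b \<in> carrier R \<Longrightarrow> a \<otimes> b \<in> P \<Longrightarrow> a \<in> P \<or> b \<in> P"
  using Spec_prime primeideal.I_prime by metis
lemma Spec_one: "P \<in> Spec R \<Longrightarrow> \<one> \<notin> P"
  using Spec_prime prime_one_notin by metis

lemma maxfip_prime:
  assumes mf: "maxfip (Spec R) \<M>"
  shows "{a \<in> carrier R. {P \<in> Spec R. a \<in> P} \<in> \<M>} \<in> Spec R"
proof -
  interpret mf: maxfip "Spec R" \<M> by (rule mf)
  define Q where "Q = {a \<in> carrier R. {P \<in> Spec R. a \<in> P} \<in> \<M>}"
  have Qc: "Q \<subseteq> carrier R" unfolding Q_def by blast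
  have zero: "\<zero> \<in> Q"
  proof -
    have "{P \<in> Spec R. \<zero> \<in> P} = Spec R" using Spec_zero by blast
    then show ?thesis unfolding Q_def using mf.X_in by simp
  qed
  have add: "a \<oplus> b \<in> Q" if "a \<in> Q" "b \<in> Q" for a b
  proof -
    have ab: "a \<in> carrier R" "b \<in> carrier R" "{P \<in> Spec R. a \<in> P} \<in> \<M>" "{P \<in> Spec R. b \<in> P} \<in> \<M>"
      using that unfolding Q_def by simp_all
    have "{P \<in> Spec R. a \<in> P} \<inter> {P \<in> Spec R. b \<in> P} \<in> \<M>" using mf.inter_in ab(3,4) by blast
    moreover have "({P \<in> Spec R. a \<in> P} \<inter> {P \<in> Spec R. b \<in> P}) \<inter> Spec R \<subseteq> {P \<in> Spec R. a \<oplus> b \<in> P}"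
      using Spec_add by blast
    ultimately have "{P \<in> Spec R. a \<oplus> b \<in> P} \<in> \<M>" by (rule mf.super_in)
    then show ?thesis unfolding Q_def using ab by simp
  qed
  have neg: "\<ominus> a \<in> Q" if "a \<in> Q" for a
  proof -
    have a: "a \<in> carrier R" "{P \<in> Spec R. a \<in> P} \<in> \<M>" using that unfolding Q_def by simp_all
    have "{P \<in> Spec R. a \<in> P} \<inter> Spec R \<subseteq> {P \<in> Spec R. \<ominus> a \<in> P}" using Spec_neg by blast
    with a(2) have "{P \<in> Spec R. \<ominus> a \<in> P} \<in> \<M>" by (rule mf.super_in)
    then show ?thesis unfolding Q_def using a by simp
  qed
  have lm: "x \<otimes> a \<in> Q" if "a \<in> Q" "x \<in> carrier R" for a x
  proof -
    have a: "a \<in> carrier R" "{P \<in> Spec R. a \<in> P} \<in> \<M>" using that unfolding Q_def by simp_all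
    have "{P \<in> Spec R. a \<in> P} \<inter> Spec R \<subseteq> {P \<in> Spec R. x \<otimes> a \<in> P}" using Spec_lmult that(2) by blast
    with a(2) have "{P \<in> Spec R. x \<otimes> a \<in> P} \<in> \<M>" by (rule mf.super_in)
    then show ?thesis unfolding Q_def using a that(2) by simp
  qed
  have rm: "a \<otimes> x \<in> Q" if "a \<in> Q" "x \<in> carrier R" for a x
  proof -
    have "x \<otimes> a \<in> Q" using lm that by blast
    moreover have "x \<otimes> a = a \<otimes> x" using that Qc m_comm by blast
    ultimately show ?thesis by simp
  qed
  have one: "\<one> \<notin> Q"
  proof
    assume "\<one> \<in> Q"
    then have "{P \<in> Spec R. \<one> \<in> P} \<in> \<M>" unfolding Q_def by simp
    moreover have "{P \<in> Spec R. \<one> \<in> P} = {}" using Spec_one by blast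
    ultimately show False using mf.nonempty_in by fastforce
  qed
  have pr: "a \<in> Q \<or> b \<in> Q" if "a \<in> carrier R" "b \<in> carrier R" "a \<otimes> b \<in> Q" for a b
  proof -
    have "{P \<in> Spec R. a \<otimes> b \<in> P} \<in> \<M>" using that(3) unfolding Q_def by simp
    moreover have "{P \<in> Spec R. a \<otimes> b \<in> P} = {P \<in> Spec R. a \<in> P} \<union> {P \<in> Spec R. b \<in> P}"
      using Spec_primemem[OF _ that(1,2)] Spec_lmult Spec_rmult that(1,2) by blast
    ultimately have "{P \<in> Spec R. a \<in> P} \<in> \<M> \<or> {P \<in> Spec R. b \<in> P} \<in> \<M>"
      using mf.union_in by simp
    then show ?thesis unfolding Q_def using that(1,2) by blast
  qed
  have sg: "subgroup Q (add_monoid R)"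
    by (rule add.subgroupI) (use Qc zero neg add in auto)
  have "primeideal Q R"
  proof (rule primeidealI2[OF additive_subgroupI[OF sg] is_cring])
    show "carrier R \<noteq> Q" using one one_closed by blast
  qed (use lm rm pr in auto)
  then show ?thesis unfolding Q_def Spec_def by simp
qed

lemma spec_cover_finite:
  assumes G: "\<And>G. G \<in> \<G> \<Longrightarrow> finite G" and cov: "\<forall>Q\<in>Spec R. \<exists>G\<in>\<G>. G \<subseteq> Q"
  shows "\<exists>\<G>'. finite \<G>' \<and> \<G>' \<subseteq> \<G> \<and> (\<forall>Q\<in>Spec R. \<exists>G\<in>\<G>'. G \<subseteq> Q)"
proof (rule ccontr)
  assume no: "\<not> ?thesis"
  define D where "D = (\<lambda>G. {P \<in> Spec R. \<not> G \<subseteq> P}) ` \<G>"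
  have fD: "fipX (Spec R) D"
    unfolding fipX_def
  proof (intro allI impI)
    fix F assume F: "finite F \<and> F \<subseteq> D"
    then obtain \<G>' where G': "\<G>' \<subseteq> \<G>" "finite \<G>'" "F = (\<lambda>G. {P \<in> Spec R. \<not> G \<subseteq> P}) ` \<G>'"
      unfolding D_def using finite_subset_image[of F "\<lambda>G. {P \<in> Spec R. \<not> G \<subseteq> P}" \<G>] by blast
    have "\<not> (\<forall>Q\<in>Spec R. \<exists>G\<in>\<G>'. G \<subseteq> Q)" using no G'(1,2) by auto
    then obtain Q where Q: "Q \<in> Spec R" "\<forall>G\<in>\<G>'. \<not> G \<subseteq> Q" by auto
    then show "\<exists>x\<in>Spec R. \<forall>A\<in>F. x \<in> A" using G'(3) by blast
  qed
  obtain \<M> where M: "D \<subseteq> \<M>" "fipX (Spec R) \<M>" "\<forall>A. fipX (Spec R) (insert A \<M>) \<longrightarrow> A \<in> \<M>"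
    using max_fip[OF fD] by blast
  have mf: "maxfip (Spec R) \<M>" by (rule maxfip.intro) (use M in auto)
  interpret mf: maxfip "Spec R" \<M> by (rule mf)
  define Q where "Q = {a \<in> carrier R. {P \<in> Spec R. a \<in> P} \<in> \<M>}"
  have QS: "Q \<in> Spec R" unfolding Q_def by (rule maxfip_prime[OF mf])
  then obtain G where G1: "G \<in> \<G>" "G \<subseteq> Q" using cov by blast
  have fin: "finite G" using G[OF G1(1)] .
  have "G' \<subseteq> Q \<longrightarrow> {P \<in> Spec R. G' \<subseteq> P} \<in> \<M>" if "finite G'" for G'
    using that
  proof (induction G' rule: finite_induct)
    case empty
    then show ?case using mf.X_in by simp
  next
    case (insert a G')
    show ?case
    proof
      assume h: "insert a G' \<subseteq> Q"
      then have "{P \<in> Spec R. G' \<subseteq> P} \<in> \<M>" using insert.IH by blast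
      moreover have "{P \<in> Spec R. a \<in> P} \<in> \<M>" using h unfolding Q_def by blast
      ultimately have "{P \<in> Spec R. a \<in> P} \<inter> {P \<in> Spec R. G' \<subseteq> P} \<in> \<M>"
        using mf.inter_in by blast
      moreover have "{P \<in> Spec R. a \<in> P} \<inter> {P \<in> Spec R. G' \<subseteq> P} = {P \<in> Spec R. insert a G' \<subseteq> P}"
        by blast
      ultimately show "{P \<in> Spec R. insert a G' \<subseteq> P} \<in> \<M>" by simp
    qed
  qed
  then have A1: "{P \<in> Spec R. G \<subseteq> P} \<in> \<M>" using fin G1(2) by blast
  have A2: "{P \<in> Spec R. \<not> G \<subseteq> P} \<in> \<M>" using M(1) G1(1) unfolding D_def by blast
  have "{P \<in> Spec R. G \<subseteq> P} \<inter> {P \<in> Spec R. \<not> G \<subseteq> P} \<in> \<M>" using mf.inter_in[OF A1 A2] .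
  then show False using mf.nonempty_in by fastforce
qed

end

context cring begin

lemma VV_genideal:
  assumes "G \<subseteq> carrier R"
  shows "VV R (genideal R G) = {P \<in> Spec R. G \<subseteq> P}"
proof -
  have "genideal R G \<subseteq> P \<longleftrightarrow> G \<subseteq> P" if "P \<in> Spec R" for P
    using Idl_subset_ideal[OF Spec_ideal[OF that] assms] .
  then show ?thesis unfolding VV_def by auto
qed

lemma flat_basis_open:
  assumes "finite G" "G \<subseteq> carrier R"
  shows "openin (flat_topology R) {P \<in> Spec R. G \<subseteq> P}"
proof -
  have "{P \<in> Spec R. G \<subseteq> P} \<in> {VV R (genideal R G) |G. finite G \<and> G \<subseteq> carrier R}"
    using VV_genideal[OF assms(2)] assms by blast
  then show ?thesis unfolding flat_topology_def by (rule topology_generated_by_Basis)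
qed

lemma flat_topspace: "topspace (flat_topology R) = Spec R"
proof -
  have "\<Union>{VV R (genideal R G) |G. finite G \<and> G \<subseteq> carrier R} = Spec R"
  proof
    show "\<Union>{VV R (genideal R G) |G. finite G \<and> G \<subseteq> carrier R} \<subseteq> Spec R"
      unfolding VV_def by blast
    have "VV R (genideal R {}) = Spec R" using VV_genideal[of "{}"] by simp
    then show "Spec R \<subseteq> \<Union>{VV R (genideal R G) |G. finite G \<and> G \<subseteq> carrier R}"
      by blast
  qed
  then show ?thesis unfolding flat_topology_def by simp
qed

lemma flat_open_basis:
  assumes "openin (flat_topology R) U" "x \<in> U"
  shows "\<exists>G. finite G \<and> G \<subseteq> carrier R \<and> x \<in> Spec R \<and> G \<subseteq> x \<and> {P \<in> Spec R. G \<subseteq> P} \<subseteq> U"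
proof -
  have "generate_topology_on {VV R (genideal R G) |G. finite G \<and> G \<subseteq> carrier R} U"
    using assms(1) unfolding flat_topology_def by (rule openin_topology_generated_by)
  then have "\<forall>x\<in>U. \<exists>G. finite G \<and> G \<subseteq> carrier R \<and> x \<in> Spec R \<and> G \<subseteq> x \<and> {P \<in> Spec R. G \<subseteq> P} \<subseteq> U"
  proof (induction rule: generate_topology_on.induct)
    case Empty
    then show ?case by simp
  next
    case (Int a b)
    show ?case
    proof
      fix x assume x: "x \<in> a \<inter> b"
      have xa: "x \<in> a" and xb: "x \<in> b" using x by auto
      have "\<exists>G. finite G \<and> G \<subseteq> carrier R \<and> x \<in> Spec R \<and> G \<subseteq> x \<and> {P \<in> Spec R. G \<subseteq> P} \<subseteq> a"
        using Int.IH(1) xa by (rule bspec)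
      then obtain G1 where G1: "finite G1" "G1 \<subseteq> carrier R" "x \<in> Spec R" "G1 \<subseteq> x" "{P \<in> Spec R. G1 \<subseteq> P} \<subseteq> a"
        by blast
      have "\<exists>G. finite G \<and> G \<subseteq> carrier R \<and> x \<in> Spec R \<and> G \<subseteq> x \<and> {P \<in> Spec R. G \<subseteq> P} \<subseteq> b"
        using Int.IH(2) xb by (rule bspec)
      then obtain G2 where G2: "finite G2" "G2 \<subseteq> carrier R" "G2 \<subseteq> x" "{P \<in> Spec R. G2 \<subseteq> P} \<subseteq> b"
        by blast
      have "{P \<in> Spec R. G1 \<union> G2 \<subseteq> P} \<subseteq> a \<inter> b" using G1(5) G2(4) by blast
      then show "\<exists>G. finite G \<and> G \<subseteq> carrier R \<and> x \<in> Spec R \<and> G \<subseteq> x \<and> {P \<in> Spec R. G \<subseteq> P} \<subseteq> a \<inter> b"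
        using G1 G2 by (intro exI[of _ "G1 \<union> G2"]) simp
    qed
  next
    case (UN K)
    show ?case
    proof
      fix x assume "x \<in> \<Union>K"
      then obtain k where k: "k \<in> K" "x \<in> k" by blast
      have "\<exists>G. finite G \<and> G \<subseteq> carrier R \<and> x \<in> Spec R \<and> G \<subseteq> x \<and> {P \<in> Spec R. G \<subseteq> P} \<subseteq> k"
        using UN.IH[OF k(1)] k(2) by (rule bspec)
      then obtain G where G: "finite G" "G \<subseteq> carrier R" "x \<in> Spec R" "G \<subseteq> x" "{P \<in> Spec R. G \<subseteq> P} \<subseteq> k"
        by blast
      have "{P \<in> Spec R. G \<subseteq> P} \<subseteq> \<Union>K" using G(5) k(1) by blast
      then show "\<exists>G. finite G \<and> G \<subseteq> carrier R \<and> x \<in> Spec R \<and> G \<subseteq> x \<and> {P \<in> Spec R. G \<subseteq> P} \<subseteq> \<Union>K"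
        using G by blast
    qed
  next
    case (Basis s)
    then obtain G where G: "finite G" "G \<subseteq> carrier R" "s = VV R (genideal R G)" by blast
    then have s: "s = {P \<in> Spec R. G \<subseteq> P}" using VV_genideal by simp
    show ?case unfolding s using G(1,2) by blast
  qed
  then show ?thesis using assms(2) by blast
qed

lemma spec_image_compact:
  fixes T :: "('x, 'y) ring_scheme"
  assumes T: "cring T" and sub: "spec_image R T f \<subseteq> Spec R"
  shows "compactin (flat_topology R) (spec_image R T f)"
  unfolding compactin_def
proof (intro conjI allI impI)
  let ?S = "spec_image R T f"
  show "?S \<subseteq> topspace (flat_topology R)" using sub flat_topspace by simp
  fix \<U> assume U: "(\<forall>U\<in>\<U>. openin (flat_topology R) U) \<and> ?S \<subseteq> \<Union>\<U>"
  have "\<forall>y\<in>?S. \<exists>B G. B \<in> \<U> \<and> finite G \<and> G \<subseteq> carrier R \<and> G \<subseteq> y \<and> {P \<in> Spec R. G \<subseteq> P} \<subseteq> B"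
  proof
    fix y assume "y \<in> ?S"
    then obtain B where B: "B \<in> \<U>" "y \<in> B" using U by blast
    then have "openin (flat_topology R) B" using U by blast
    from flat_open_basis[OF this B(2)]
    obtain G where "finite G" "G \<subseteq> carrier R" "G \<subseteq> y" "{P \<in> Spec R. G \<subseteq> P} \<subseteq> B"
      by blast
    then show "\<exists>B G. B \<in> \<U> \<and> finite G \<and> G \<subseteq> carrier R \<and> G \<subseteq> y \<and> {P \<in> Spec R. G \<subseteq> P} \<subseteq> B"
      using B(1) by blast
  qed
  then have "\<exists>Bf. \<forall>y\<in>?S. \<exists>G. Bf y \<in> \<U> \<and> finite G \<and> G \<subseteq> carrier R \<and> G \<subseteq> y \<and> {P \<in> Spec R. G \<subseteq> P} \<subseteq> Bf y"
    by (rule bchoice)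
  then obtain Bf where "\<forall>y\<in>?S. \<exists>G. Bf y \<in> \<U> \<and> finite G \<and> G \<subseteq> carrier R \<and> G \<subseteq> y \<and> {P \<in> Spec R. G \<subseteq> P} \<subseteq> Bf y"
    by (rule exE)
  then have "\<exists>Gf. \<forall>y\<in>?S. Bf y \<in> \<U> \<and> finite (Gf y) \<and> Gf y \<subseteq> carrier R \<and> Gf y \<subseteq> y \<and> {P \<in> Spec R. Gf y \<subseteq> P} \<subseteq> Bf y"
    by (rule bchoice)
  then obtain Gf where BG: "\<forall>y\<in>?S. Bf y \<in> \<U> \<and> finite (Gf y) \<and> Gf y \<subseteq> carrier R \<and> Gf y \<subseteq> y \<and> {P \<in> Spec R. Gf y \<subseteq> P} \<subseteq> Bf y"
    by (rule exE)
  define \<G> where "\<G> = (\<lambda>y. f ` Gf y) ` ?S"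
  have cov: "\<forall>Q\<in>Spec T. \<exists>G\<in>\<G>. G \<subseteq> Q"
  proof
    fix Q assume Q: "Q \<in> Spec T"
    let ?y = "{r \<in> carrier R. f r \<in> Q}"
    have y: "?y \<in> ?S" unfolding spec_image_def using Q by blast
    then have "Gf ?y \<subseteq> ?y" using BG by blast
    then have "f ` Gf ?y \<subseteq> Q" by blast
    then show "\<exists>G\<in>\<G>. G \<subseteq> Q" unfolding \<G>_def using y by blast
  qed
  have fin: "finite G" if "G \<in> \<G>" for G using that BG unfolding \<G>_def by blast
  obtain \<G>' where G': "finite \<G>'" "\<G>' \<subseteq> \<G>" "\<forall>Q\<in>Spec T. \<exists>G\<in>\<G>'. G \<subseteq> Q"
    using cring.spec_cover_finite[OF T fin cov] by blast
  obtain S0 where S0: "S0 \<subseteq> ?S" "finite S0" "\<G>' = (\<lambda>y. f ` Gf y) ` S0"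
    using finite_subset_image[OF G'(1), of "\<lambda>y. f ` Gf y" ?S] G'(2) unfolding \<G>_def by blast
  show "\<exists>\<F>. finite \<F> \<and> \<F> \<subseteq> \<U> \<and> ?S \<subseteq> \<Union>\<F>"
  proof (intro exI conjI)
    show "finite (Bf ` S0)" using S0(2) by simp
    show "Bf ` S0 \<subseteq> \<U>" using S0(1) BG by blast
    show "?S \<subseteq> \<Union>(Bf ` S0)"
    proof
      fix z assume z: "z \<in> ?S"
      then obtain Q where Q: "Q \<in> Spec T" "z = {r \<in> carrier R. f r \<in> Q}" unfolding spec_image_def by blast
      obtain G where G: "G \<in> \<G>'" "G \<subseteq> Q" using G'(3) Q(1) by blast
      then obtain y where y: "y \<in> S0" "G = f ` Gf y" using S0(3) by blast
      have yS: "y \<in> ?S" using y(1) S0(1) by blast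
      have "Gf y \<subseteq> carrier R" using BG yS by blast
      then have "Gf y \<subseteq> z" using y(2) G(2) Q(2) by blast
      moreover have "z \<in> Spec R" using z sub by blast
      ultimately have "z \<in> Bf y" using BG yS by blast
      then show "z \<in> \<Union>(Bf ` S0)" using y(1) by blast
    qed
  qed
qed

lemma Spec_spec_image: "spec_image R R (\<lambda>x. x) = Spec R"
proof -
  have "{r \<in> carrier R. r \<in> Q} = Q" if "Q \<in> Spec R" for Q using Spec_sub[OF that] by blast
  then show ?thesis unfolding spec_image_def by auto
qed

lemma Spec_compact: "compact_space (flat_topology R)"
  unfolding compact_space_def flat_topspace
  using spec_image_compact[OF is_cring, of "\<lambda>x. x"] Spec_spec_image by simp

end

context Module.module begin

lemma Ass_compact_closed:
  assumes cpt: "compactin (flat_topology R) (Ass R M)"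
  shows "zariski_closed R (Supp R M)"
proof (rule closed_criterion[OF Supp_Spec])
  fix P assume P: "P \<in> Spec R" and I: "{r \<in> carrier R. \<forall>P'\<in>Supp R M. r \<in> P'} \<subseteq> P"
  show "P \<in> Supp R M"
  proof (rule ccontr)
    assume nP: "P \<notin> Supp R M"
    have ex: "\<exists>a. a \<in> Q \<and> a \<notin> P" if "Q \<in> Ass R M" for Q
    proof (rule ccontr)
      assume "\<nexists>a. a \<in> Q \<and> a \<notin> P" then have "Q \<subseteq> P" by blast
      then show False using Ass_Supp_up[OF that P] nP by blast
    qed
    define g where "g Q = (SOME a. a \<in> Q \<and> a \<notin> P)" for Q
    have g: "g Q \<in> Q \<and> g Q \<notin> P" if "Q \<in> Ass R M" for Q
      using someI_ex[OF ex[OF that]] unfolding g_def .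
    have gc: "g Q \<in> carrier R" if "Q \<in> Ass R M" for Q
      using g[OF that] Ass_Spec Spec_sub that by blast
    define Op where "Op Q = {P' \<in> Spec R. {g Q} \<subseteq> P'}" for Q
    have op: "\<forall>U\<in>Op ` Ass R M. openin (flat_topology R) U"
      unfolding Op_def using flat_basis_open gc by blast
    have cv: "Ass R M \<subseteq> \<Union>(Op ` Ass R M)"
    proof
      fix Q assume Q: "Q \<in> Ass R M"
      then have "Q \<in> Op Q" unfolding Op_def using g[OF Q] Ass_Spec by blast
      then show "Q \<in> \<Union>(Op ` Ass R M)" using Q by blast
    qed
    obtain \<F> where F: "finite \<F>" "\<F> \<subseteq> Op ` Ass R M" "Ass R M \<subseteq> \<Union>\<F>"
      using cpt op cv unfolding compactin_def by meson
    obtain A0 where A0: "A0 \<subseteq> Ass R M" "finite A0" "\<F> = Op ` A0"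
      using finite_subset_image[OF F(1,2)] by blast
    have Ac: "g ` A0 \<subseteq> carrier R" using gc A0(1) by blast
    have AP: "g ` A0 \<inter> P = {}" using g A0(1) by blast
    obtain b where b: "b \<in> carrier R" "b \<notin> P" "\<forall>c\<in>g ` A0. \<forall>Q. ideal Q R \<and> c \<in> Q \<longrightarrow> b \<in> Q"
      using prod_avoid[OF finite_imageI[OF A0(2)] Ac Spec_prime[OF P] AP] by blast
    have "b \<in> P'" if hP: "P' \<in> Supp R M" for P'
    proof -
      obtain Q where Q: "Q \<in> Ass R M" "Q \<subseteq> P'" using Supp_Ass_below[OF hP] by blast
      then obtain Q0 where Q0: "Q0 \<in> A0" "Q \<in> Op Q0" using F(3) A0(3) by blast
      have "g Q0 \<in> Q" using Q0(2) unfolding Op_def by blast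
      moreover have "ideal Q R" using Q(1) Ass_Spec Spec_ideal by blast
      ultimately have "b \<in> Q" using b(3) Q0(1) by blast
      then show ?thesis using Q(2) by blast
    qed
    then have "b \<in> P" using I b(1) by blast
    then show False using b(2) by blast
  qed
qed

end

lemma contr_prime:
  assumes R: "cring R" and T: "cring T" and f: "f \<in> ring_hom R T" and Q: "Q \<in> Spec T"
  shows "{r \<in> carrier R. f r \<in> Q} \<in> Spec R"
proof -
  interpret R: cring R by (rule R)
  interpret T: cring T by (rule T)
  have hr: "ring_hom_ring R T f" using ring_hom_ringI2[OF R.ring_axioms T.ring_axioms f] .
  have Qi: "ideal Q T" using T.Spec_ideal[OF Q] .
  have "primeideal {r \<in> carrier R. f r \<in> Q} R"
  proof (rule primeidealI[OF ring_hom_ring.ideal_vimage[OF hr Qi] R])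
    have "f \<one>\<^bsub>R\<^esub> \<notin> Q" using ring_hom_one[OF f] T.Spec_one[OF Q] by simp
    then show "carrier R \<noteq> {r \<in> carrier R. f r \<in> Q}" using R.one_closed by blast
  next
    fix a b assume ab: "a \<in> carrier R" "b \<in> carrier R" "a \<otimes>\<^bsub>R\<^esub> b \<in> {r \<in> carrier R. f r \<in> Q}"
    then have "f a \<otimes>\<^bsub>T\<^esub> f b \<in> Q" using ring_hom_mult[OF f] by simp
    then have "f a \<in> Q \<or> f b \<in> Q"
      using T.Spec_primemem[OF Q] ring_hom_closed[OF f] ab(1,2) by blast
    then show "a \<in> {r \<in> carrier R. f r \<in> Q} \<or> b \<in> {r \<in> carrier R. f r \<in> Q}" using ab(1,2) by blast
  qed
  then show ?thesis unfolding Spec_def by simp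
qed

context cring begin

lemma closed_is_image:
  assumes I: "ideal I R"
  shows "VV R I = spec_image R (R Quot I) (a_r_coset R I)"
proof -
  interpret I: ideal I R by (rule I)
  have QC: "cring (R Quot I)" using I.quotient_is_cring[OF is_cring] .
  interpret Q: cring "R Quot I" by (rule QC)
  have hom: "a_r_coset R I \<in> ring_hom R (R Quot I)" by (rule I.rcos_ring_hom)
  show ?thesis
  proof (intro equalityI subsetI)
    fix C assume "C \<in> spec_image R (R Quot I) (a_r_coset R I)"
    then obtain Q where Q: "Q \<in> Spec (R Quot I)" "C = {r \<in> carrier R. I +> r \<in> Q}"
      unfolding spec_image_def by blast
    have CS: "C \<in> Spec R" unfolding Q(2) using contr_prime[OF is_cring QC hom Q(1)] .
    have "I \<subseteq> C"
    proof
      fix r assume r: "r \<in> I"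
      have "I +> r = I" using I.a_rcos_const[OF r] .
      moreover have "I \<in> Q" using Q.Spec_zero[OF Q(1)] unfolding FactRing_def by simp
      ultimately show "r \<in> C" unfolding Q(2) using r I.Icarr by simp
    qed
    then show "C \<in> VV R I" unfolding VV_def using CS by blast
  next
    fix P assume "P \<in> VV R I"
    then have P: "P \<in> Spec R" "I \<subseteq> P" unfolding VV_def by blast+
    have Pi: "ideal P R" using Spec_ideal[OF P(1)] .
    define Q where "Q = a_r_coset R I ` P"
    have Qi: "ideal Q (R Quot I)" unfolding Q_def using ring_ideal_imp_quot_ideal[OF I Pi] .
    have Qc: "Q \<subseteq> carrier (R Quot I)" using ideal.Icarr[OF Qi] by blast
    have UQ: "\<Union>Q = P" unfolding Q_def using ideal_incl_iff[OF I Pi] P(2) by simp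
    have mem: "I +> a \<in> Q \<longleftrightarrow> a \<in> P" if "a \<in> carrier R" for a
      using canonical_proj_vimage_mem_iff[OF I Qc that] UQ by simp
    have carr: "\<exists>a\<in>carrier R. x = I +> a" if "x \<in> carrier (R Quot I)" for x
      using that unfolding FactRing_def A_RCOSETS_def' by simp
    have "primeideal Q (R Quot I)"
    proof (rule primeidealI[OF Qi QC])
      have "I +> \<one> \<in> carrier (R Quot I)" unfolding FactRing_def A_RCOSETS_def' by auto
      moreover have "I +> \<one> \<notin> Q" using mem[OF one_closed] Spec_one[OF P(1)] by simp
      ultimately show "carrier (R Quot I) \<noteq> Q" by blast
    next
      fix x y assume xy: "x \<in> carrier (R Quot I)" "y \<in> carrier (R Quot I)" "x \<otimes>\<^bsub>R Quot I\<^esub> y \<in> Q"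
      obtain a where a: "a \<in> carrier R" "x = I +> a" using carr[OF xy(1)] by blast
      obtain b where b: "b \<in> carrier R" "y = I +> b" using carr[OF xy(2)] by blast
      have "x \<otimes>\<^bsub>R Quot I\<^esub> y = I +> (a \<otimes> b)"
        unfolding FactRing_def a(2) b(2) using I.rcoset_mult_add[OF a(1) b(1)] by simp
      then have "a \<otimes> b \<in> P" using xy(3) mem[of "a \<otimes> b"] a(1) b(1) by simp
      then have "a \<in> P \<or> b \<in> P" using Spec_primemem[OF P(1) a(1) b(1)] by blast
      then show "x \<in> Q \<or> y \<in> Q" using mem a b by blast
    qed
    then have QS: "Q \<in> Spec (R Quot I)" unfolding Spec_def by simp
    have "P = {r \<in> carrier R. I +> r \<in> Q}" using mem Spec_sub[OF P(1)] by blast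
    then show "P \<in> spec_image R (R Quot I) (a_r_coset R I)" unfolding spec_image_def using QS by blast
  qed
qed

lemma closed_proconstructible:
  assumes "zariski_closed R S"
  shows "pro_constructible TYPE('a set) R S"
proof -
  obtain I where I: "ideal I R" "S = VV R I" using assms unfolding zariski_closed_def by blast
  interpret I: ideal I R by (rule I(1))
  have "cring (R Quot I)" using I.quotient_is_cring[OF is_cring] .
  moreover have "a_r_coset R I \<in> ring_hom R (R Quot I)" by (rule I.rcos_ring_hom)
  moreover have "S = spec_image R (R Quot I) (a_r_coset R I)" using closed_is_image[OF I(1)] I(2) by simp
  ultimately show ?thesis unfolding pro_constructible_def by blast
qed

lemma prime_pow:
  assumes "P \<in> Spec R" "a \<in> carrier R" "a [^] (n::nat) \<in> P"
  shows "a \<in> P"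
  using assms(3)
proof (induction n)
  case 0
  then show ?case using Spec_one[OF assms(1)] by simp
next
  case (Suc n)
  then have "a [^] n \<otimes> a \<in> P" by simp
  then have "a [^] n \<in> P \<or> a \<in> P" using Spec_primemem[OF assms(1) nat_pow_closed[OF assms(2)] assms(2)] by blast
  then show ?case using Suc.IH by blast
qed

lemma VV_radical:
  assumes "I \<subseteq> carrier R"
  shows "VV R (radical R I) = VV R I"
proof -
  have "radical R I \<subseteq> P \<longleftrightarrow> I \<subseteq> P" if P: "P \<in> Spec R" for P
  proof
    assume "radical R I \<subseteq> P"
    moreover have "I \<subseteq> radical R I"
    proof
      fix a assume a: "a \<in> I"
      have ac: "a \<in> carrier R" using a assms by blast
      then have "a [^] (1::nat) \<in> I" using a by simp
      then show "a \<in> radical R I" unfolding radical_def using ac by blast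
    qed
    ultimately show "I \<subseteq> P" by blast
  next
    assume IP: "I \<subseteq> P"
    show "radical R I \<subseteq> P"
    proof
      fix a assume "a \<in> radical R I"
      then obtain n :: nat where "a \<in> carrier R" "a [^] n \<in> I" unfolding radical_def by blast
      then show "a \<in> P" using prime_pow[OF P] IP by blast
    qed
  qed
  then show ?thesis unfolding VV_def by blast
qed

end

definition ctrl :: "('a, 'b) ring_scheme \<Rightarrow> ('a, 'm, 'e) module_scheme \<Rightarrow> bool" where
  "ctrl R M \<longleftrightarrow> (\<exists>G. finite G \<and> G \<subseteq> carrier M \<and>
     (\<forall>u\<in>carrier R. (\<forall>g\<in>G. u \<odot>\<^bsub>M\<^esub> g = \<zero>\<^bsub>M\<^esub>) \<longrightarrow> (\<forall>x\<in>carrier M. u \<odot>\<^bsub>M\<^esub> x = \<zero>\<^bsub>M\<^esub>)))"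

context Module.module begin

lemma ann_ideal: "ideal (ann R M) R"
proof -
  have sub: "ann R M \<subseteq> carrier R" unfolding ann_def by blast
  have z: "\<zero> \<in> ann R M" unfolding ann_def by simp
  have n: "\<ominus> a \<in> ann R M" if "a \<in> ann R M" for a
  proof -
    have a: "a \<in> carrier R" "\<forall>x\<in>carrier M. a \<odot>\<^bsub>M\<^esub> x = \<zero>\<^bsub>M\<^esub>" using that unfolding ann_def by simp_all
    have "(\<ominus> a) \<odot>\<^bsub>M\<^esub> x = \<zero>\<^bsub>M\<^esub>" if "x \<in> carrier M" for x
      using smult_l_minus[OF a(1) that] a(2) that by simp
    then show ?thesis unfolding ann_def using a(1) by simp
  qed
  have ad: "a \<oplus> b \<in> ann R M" if "a \<in> ann R M" "b \<in> ann R M" for a b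
  proof -
    have a: "a \<in> carrier R" "\<forall>x\<in>carrier M. a \<odot>\<^bsub>M\<^esub> x = \<zero>\<^bsub>M\<^esub>" using that(1) unfolding ann_def by simp_all
    have b: "b \<in> carrier R" "\<forall>x\<in>carrier M. b \<odot>\<^bsub>M\<^esub> x = \<zero>\<^bsub>M\<^esub>" using that(2) unfolding ann_def by simp_all
    have "(a \<oplus> b) \<odot>\<^bsub>M\<^esub> x = \<zero>\<^bsub>M\<^esub>" if "x \<in> carrier M" for x
      using smult_l_distr[OF a(1) b(1) that] a(2) b(2) that by simp
    then show ?thesis unfolding ann_def using a(1) b(1) by simp
  qed
  have l: "x \<otimes> a \<in> ann R M" if "a \<in> ann R M" "x \<in> carrier R" for a x
  proof -
    have a: "a \<in> carrier R" "\<forall>x\<in>carrier M. a \<odot>\<^bsub>M\<^esub> x = \<zero>\<^bsub>M\<^esub>" using that(1) unfolding ann_def by simp_all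
    have "(x \<otimes> a) \<odot>\<^bsub>M\<^esub> m = \<zero>\<^bsub>M\<^esub>" if "m \<in> carrier M" for m
      using smult_assoc1[OF \<open>x \<in> carrier R\<close> a(1) that] a(2) that \<open>x \<in> carrier R\<close> by simp
    then show ?thesis unfolding ann_def using a(1) that(2) by simp
  qed
  have r: "a \<otimes> x \<in> ann R M" if "a \<in> ann R M" "x \<in> carrier R" for a x
  proof -
    have "a \<in> carrier R" using that(1) sub by blast
    then have "a \<otimes> x = x \<otimes> a" using that(2) R.m_comm by simp
    then show ?thesis using l[OF that] by simp
  qed
  have sg: "subgroup (ann R M) (add_monoid R)"
    by (rule R.add.subgroupI) (use sub z n ad in auto)
  show ?thesis by (rule idealI[OF R.ring_axioms sg]) (use l r in auto)
qed

lemma ctrl_kill: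
  assumes c: "ctrl R M" and S: "S \<subseteq> carrier R" "\<one> \<in> S" "\<And>a b. a \<in> S \<Longrightarrow> b \<in> S \<Longrightarrow> a \<otimes> b \<in> S"
    and kill: "\<forall>x\<in>carrier M. \<exists>u\<in>S. u \<odot>\<^bsub>M\<^esub> x = \<zero>\<^bsub>M\<^esub>"
  shows "\<exists>u\<in>S. u \<in> ann R M"
proof -
  obtain G where G: "finite G" "G \<subseteq> carrier M"
    "\<forall>u\<in>carrier R. (\<forall>g\<in>G. u \<odot>\<^bsub>M\<^esub> g = \<zero>\<^bsub>M\<^esub>) \<longrightarrow> (\<forall>x\<in>carrier M. u \<odot>\<^bsub>M\<^esub> x = \<zero>\<^bsub>M\<^esub>)"
    using c unfolding ctrl_def by blast
  have "G' \<subseteq> G \<longrightarrow> (\<exists>u\<in>S. \<forall>g\<in>G'. u \<odot>\<^bsub>M\<^esub> g = \<zero>\<^bsub>M\<^esub>)" if "finite G'" for G'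
    using that
  proof (induction G' rule: finite_induct)
    case empty
    then show ?case using S(2) by blast
  next
    case (insert g G')
    show ?case
    proof
      assume h: "insert g G' \<subseteq> G"
      then obtain u where u: "u \<in> S" "\<forall>g'\<in>G'. u \<odot>\<^bsub>M\<^esub> g' = \<zero>\<^bsub>M\<^esub>" using insert.IH by blast
      have gc: "g \<in> carrier M" using h G(2) by blast
      obtain v where v: "v \<in> S" "v \<odot>\<^bsub>M\<^esub> g = \<zero>\<^bsub>M\<^esub>" using kill gc by blast
      have uc: "u \<in> carrier R" "v \<in> carrier R" using u(1) v(1) S(1) by blast+
      have "(u \<otimes> v) \<odot>\<^bsub>M\<^esub> g' = \<zero>\<^bsub>M\<^esub>" if g'i: "g' \<in> insert g G'" for g'
      proof (cases "g' = g")
        case True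
        then show ?thesis using smult_assoc1[OF uc gc] v(2) uc(1) by simp
      next
        case False
        then have g': "g' \<in> G'" "g' \<in> carrier M" using g'i h G(2) by blast+
        have "(u \<otimes> v) \<odot>\<^bsub>M\<^esub> g' = (v \<otimes> u) \<odot>\<^bsub>M\<^esub> g'" using uc R.m_comm by simp
        also have "\<dots> = v \<odot>\<^bsub>M\<^esub> (u \<odot>\<^bsub>M\<^esub> g')" using smult_assoc1[OF uc(2) uc(1) g'(2)] .
        also have "\<dots> = \<zero>\<^bsub>M\<^esub>" using u(2) g'(1) uc(2) by simp
        finally show ?thesis .
      qed
      then show "\<exists>u\<in>S. \<forall>g'\<in>insert g G'. u \<odot>\<^bsub>M\<^esub> g' = \<zero>\<^bsub>M\<^esub>" using S(3)[OF u(1) v(1)] by blast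
    qed
  qed
  then obtain u where u: "u \<in> S" "\<forall>g\<in>G. u \<odot>\<^bsub>M\<^esub> g = \<zero>\<^bsub>M\<^esub>" using G(1) by blast
  have uc: "u \<in> carrier R" using u(1) S(1) by blast
  then have "\<forall>x\<in>carrier M. u \<odot>\<^bsub>M\<^esub> x = \<zero>\<^bsub>M\<^esub>" using G(3) u(2) by blast
  then have "u \<in> ann R M" unfolding ann_def using uc by simp
  then show ?thesis using u(1) by blast
qed

lemma ctrl_Supp:
  assumes "ctrl R M"
  shows "Supp R M = VV R (ann R M)"
proof (intro equalityI subsetI)
  fix P assume P: "P \<in> Supp R M"
  then obtain x where x: "x \<in> carrier M" "ann_elem R M x \<subseteq> P" and PS: "P \<in> Spec R"
    using Supp_iff by blast
  have "ann R M \<subseteq> ann_elem R M x" unfolding ann_def ann_elem_def using x(1) by blast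
  then show "P \<in> VV R (ann R M)" unfolding VV_def using x(2) PS by blast
next
  fix P assume "P \<in> VV R (ann R M)"
  then have P: "P \<in> Spec R" "ann R M \<subseteq> P" unfolding VV_def by blast+
  show "P \<in> Supp R M"
  proof (rule ccontr)
    assume nP: "P \<notin> Supp R M"
    have kill: "\<forall>x\<in>carrier M. \<exists>u\<in>carrier R - P. u \<odot>\<^bsub>M\<^esub> x = \<zero>\<^bsub>M\<^esub>"
    proof
      fix x assume x: "x \<in> carrier M"
      have "\<not> ann_elem R M x \<subseteq> P" using nP Supp_iff P(1) x by blast
      then show "\<exists>u\<in>carrier R - P. u \<odot>\<^bsub>M\<^esub> x = \<zero>\<^bsub>M\<^esub>" unfolding ann_elem_def by blast
    qed
    have S2: "\<one> \<in> carrier R - P" using Spec_one[OF P(1)] by simp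
    have S3: "a \<otimes> b \<in> carrier R - P" if "a \<in> carrier R - P" "b \<in> carrier R - P" for a b
      using prime_mult_notin[OF Spec_prime[OF P(1)]] that by simp
    obtain u where "u \<in> carrier R - P" "u \<in> ann R M"
      using ctrl_kill[OF assms _ S2 S3 kill] by blast
    then show False using P(2) by blast
  qed
qed

lemma ctrl_Obs:
  assumes "ctrl R M"
  shows "Obs R M = radical R (ann R M)"
proof (intro equalityI subsetI)
  fix a assume "a \<in> Obs R M"
  then have a: "a \<in> carrier R" "loc_zero R M {a [^] (n::nat) | n. True}" unfolding Obs_def by blast+
  let ?S = "{a [^] (n::nat) | n. True}"
  have S1: "?S \<subseteq> carrier R" using a(1) by auto
  have Sne: "?S \<noteq> {}" by blast
  have "a [^] (0::nat) = \<one>" by simp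
  then have S2: "\<one> \<in> ?S" by (metis (mono_tags, lifting) mem_Collect_eq)
  have S3: "x \<otimes> y \<in> ?S" if xy: "x \<in> ?S" "y \<in> ?S" for x y
  proof -
    obtain m :: nat where m: "x = a [^] m" using xy(1) by blast
    obtain n :: nat where n: "y = a [^] n" using xy(2) by blast
    have "x \<otimes> y = a [^] (m + n)" unfolding m n using R.nat_pow_mult[OF a(1)] by simp
    then show ?thesis by blast
  qed
  have kill: "\<forall>x\<in>carrier M. \<exists>u\<in>?S. u \<odot>\<^bsub>M\<^esub> x = \<zero>\<^bsub>M\<^esub>" using loc_zero_iff[OF S1 Sne] a(2) by blast
  obtain u where "u \<in> ?S" "u \<in> ann R M" using ctrl_kill[OF assms S1 S2 S3 kill] by blast
  then show "a \<in> radical R (ann R M)" unfolding radical_def using a(1) by blast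
next
  fix a assume "a \<in> radical R (ann R M)"
  then obtain n :: nat where a: "a \<in> carrier R" "a [^] n \<in> ann R M" unfolding radical_def by blast
  let ?S = "{a [^] (n::nat) | n. True}"
  have S1: "?S \<subseteq> carrier R" using a(1) by auto
  have Sne: "?S \<noteq> {}" by blast
  have "\<forall>x\<in>carrier M. a [^] n \<odot>\<^bsub>M\<^esub> x = \<zero>\<^bsub>M\<^esub>" using a(2) unfolding ann_def by blast
  then have "\<forall>x\<in>carrier M. \<exists>u\<in>?S. u \<odot>\<^bsub>M\<^esub> x = \<zero>\<^bsub>M\<^esub>" by blast
  then have "loc_zero R M ?S" using loc_zero_iff[OF S1 Sne] by blast
  then show "a \<in> Obs R M" unfolding Obs_def using a(1) by blast
qed

lemma fin_gen_ctrl: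
  assumes "fin_gen R M"
  shows "ctrl R M"
proof -
  obtain G where G: "finite G" "G \<subseteq> carrier M" "\<forall>N. submodule N R M \<and> G \<subseteq> N \<longrightarrow> N = carrier M"
    using assms unfolding fin_gen_def by blast
  have "\<forall>x\<in>carrier M. u \<odot>\<^bsub>M\<^esub> x = \<zero>\<^bsub>M\<^esub>" if u: "u \<in> carrier R" "\<forall>g\<in>G. u \<odot>\<^bsub>M\<^esub> g = \<zero>\<^bsub>M\<^esub>" for u
  proof -
    let ?N = "{x \<in> carrier M. u \<odot>\<^bsub>M\<^esub> x = \<zero>\<^bsub>M\<^esub>}"
    have "submodule ?N R M"
    proof (rule submoduleI)
      show "?N \<subseteq> carrier M" by blast
      show "\<zero>\<^bsub>M\<^esub> \<in> ?N" using u(1) by simp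
      show "\<ominus>\<^bsub>M\<^esub> x \<in> ?N" if "x \<in> ?N" for x using that u(1) by (simp add: smult_r_minus)
      show "x \<oplus>\<^bsub>M\<^esub> y \<in> ?N" if "x \<in> ?N" "y \<in> ?N" for x y using that u(1) by (simp add: smult_r_distr)
      show "a \<odot>\<^bsub>M\<^esub> x \<in> ?N" if ax: "a \<in> carrier R" "x \<in> ?N" for a x
      proof -
        have xc: "x \<in> carrier M" "u \<odot>\<^bsub>M\<^esub> x = \<zero>\<^bsub>M\<^esub>" using ax(2) by simp_all
        have "u \<odot>\<^bsub>M\<^esub> (a \<odot>\<^bsub>M\<^esub> x) = (u \<otimes> a) \<odot>\<^bsub>M\<^esub> x" using smult_assoc1[OF u(1) ax(1) xc(1)] by simp
        also have "\<dots> = (a \<otimes> u) \<odot>\<^bsub>M\<^esub> x" using R.m_comm ax(1) u(1) by simp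
        also have "\<dots> = a \<odot>\<^bsub>M\<^esub> (u \<odot>\<^bsub>M\<^esub> x)" using smult_assoc1[OF ax(1) u(1) xc(1)] .
        also have "\<dots> = \<zero>\<^bsub>M\<^esub>" using xc(2) ax(1) by simp
        finally show ?thesis using ax(1) xc(1) by simp
      qed
    qed
    moreover have "G \<subseteq> ?N" using u(2) G(2) by blast
    ultimately have "?N = carrier M" using G(3) by blast
    then show ?thesis by blast
  qed
  then show ?thesis unfolding ctrl_def using G(1,2) by blast
qed

lemma sub_zero:
  assumes "submodule N R M"
  shows "\<zero>\<^bsub>M\<^esub> \<in> N"
proof -
  obtain h where h: "h \<in> N" using submoduleE(2)[OF assms] by blast
  then have hc: "h \<in> carrier M" using submoduleE(1)[OF assms] by blast
  have "\<zero> \<odot>\<^bsub>M\<^esub> h \<in> N" using submoduleE(4)[OF assms R.zero_closed h] .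
  then show ?thesis using hc by simp
qed

lemma sub_inter:
  assumes A: "submodule A R M" and B: "submodule B R M"
  shows "submodule (A \<inter> B) R M"
proof (rule submoduleI)
  show "A \<inter> B \<subseteq> carrier M" using submoduleE(1)[OF A] by blast
  show "\<zero>\<^bsub>M\<^esub> \<in> A \<inter> B" using sub_zero[OF A] sub_zero[OF B] by blast
  show "\<ominus>\<^bsub>M\<^esub> a \<in> A \<inter> B" if "a \<in> A \<inter> B" for a
    using submoduleE(3)[OF A] submoduleE(3)[OF B] that by blast
  show "a \<oplus>\<^bsub>M\<^esub> b \<in> A \<inter> B" if "a \<in> A \<inter> B" "b \<in> A \<inter> B" for a b
    using submoduleE(5)[OF A] submoduleE(5)[OF B] that by blast
  show "a \<odot>\<^bsub>M\<^esub> x \<in> A \<inter> B" if "a \<in> carrier R" "x \<in> A \<inter> B" for a x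
    using submoduleE(4)[OF A] submoduleE(4)[OF B] that by blast
qed

lemma fl_fin_gen:
  assumes "finite_length R M"
  shows "fin_gen R M"
proof -
  obtain n :: nat and Ms :: "nat \<Rightarrow> _ set" where
    Ms: "Ms 0 = {\<zero>\<^bsub>M\<^esub>}" "Ms n = carrier M" "\<forall>i\<le>n. submodule (Ms i) R M"
    "\<forall>i<n. Ms i \<subset> Ms (Suc i) \<and> \<not> (\<exists>N. submodule N R M \<and> Ms i \<subset> N \<and> N \<subset> Ms (Suc i))"
    using assms unfolding finite_length_def by blast
  have "i \<le> n \<longrightarrow> (\<exists>G. finite G \<and> G \<subseteq> Ms i \<and> (\<forall>N. submodule N R M \<and> G \<subseteq> N \<longrightarrow> Ms i \<subseteq> N))" for i
  proof (induction i)
    case 0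
    show ?case
    proof
      assume "0 \<le> n"
      have "\<forall>N. submodule N R M \<and> {} \<subseteq> N \<longrightarrow> Ms 0 \<subseteq> N" by (simp add: Ms(1) sub_zero)
      then show "\<exists>G. finite G \<and> G \<subseteq> Ms 0 \<and> (\<forall>N. submodule N R M \<and> G \<subseteq> N \<longrightarrow> Ms 0 \<subseteq> N)" by blast
    qed
  next
    case (Suc i)
    show ?case
    proof
      assume si: "Suc i \<le> n"
      then obtain G where G: "finite G" "G \<subseteq> Ms i" "\<forall>N. submodule N R M \<and> G \<subseteq> N \<longrightarrow> Ms i \<subseteq> N"
        using Suc.IH by auto
      have lt: "i < n" using si by simp
      have ss: "Ms i \<subset> Ms (Suc i)" and nb: "\<not> (\<exists>N. submodule N R M \<and> Ms i \<subset> N \<and> N \<subset> Ms (Suc i))"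
        using Ms(4) lt by blast+
      have subS: "submodule (Ms (Suc i)) R M" using Ms(3) si by blast
      obtain x where x: "x \<in> Ms (Suc i)" "x \<notin> Ms i" using ss by blast
      have "Ms (Suc i) \<subseteq> N" if N: "submodule N R M" "insert x G \<subseteq> N" for N
      proof -
        have MiN: "Ms i \<subseteq> N" using G(3) N by blast
        let ?K = "N \<inter> Ms (Suc i)"
        have K: "submodule ?K R M" using sub_inter[OF N(1) subS] .
        have "Ms i \<subset> ?K" using MiN ss x N(2) by blast
        moreover have "?K \<subseteq> Ms (Suc i)" by blast
        ultimately have "?K = Ms (Suc i)" using nb K by blast
        then show ?thesis by blast
      qed
      moreover have "finite (insert x G)" using G(1) by simp
      moreover have "insert x G \<subseteq> Ms (Suc i)" using G(2) ss x(1) by blast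
      ultimately show "\<exists>G. finite G \<and> G \<subseteq> Ms (Suc i) \<and> (\<forall>N. submodule N R M \<and> G \<subseteq> N \<longrightarrow> Ms (Suc i) \<subseteq> N)"
        by blast
    qed
  qed
  then have "\<exists>G. finite G \<and> G \<subseteq> Ms n \<and> (\<forall>N. submodule N R M \<and> G \<subseteq> N \<longrightarrow> Ms n \<subseteq> N)"
    by simp
  then obtain G where G: "finite G" "G \<subseteq> Ms n" "\<forall>N. submodule N R M \<and> G \<subseteq> N \<longrightarrow> Ms n \<subseteq> N"
    by blast
  have "N = carrier M" if "submodule N R M" "G \<subseteq> N" for N
    using G(3) that submoduleE(1)[OF that(1)] Ms(2) by blast
  then show ?thesis unfolding fin_gen_def using G(1,2) Ms(2) by blast
qed

end

context Module.module begin

lemma afg_ctrl: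
  assumes "afg TYPE('s) R M"
  shows "ctrl R M"
proof -
  obtain S :: "'s ring" and f :: "'a \<Rightarrow> 's" and F :: "('s, 'c) module" where
    h: "cring S" "f \<in> ring_hom R S" "Module.module S F" "fin_gen S F" "carrier F = carrier M"
       "add F = add M" "zero F = zero M" "\<forall>r\<in>carrier R. \<forall>x\<in>carrier M. r \<odot>\<^bsub>M\<^esub> x = f r \<odot>\<^bsub>F\<^esub> x"
    using assms unfolding afg_def by blast
  interpret F: Module.module S F by (rule h(3))
  obtain G where G: "finite G" "G \<subseteq> carrier F" "\<forall>N. submodule N S F \<and> G \<subseteq> N \<longrightarrow> N = carrier F"
    using h(4) unfolding fin_gen_def by blast
  have "\<forall>x\<in>carrier M. u \<odot>\<^bsub>M\<^esub> x = \<zero>\<^bsub>M\<^esub>" if u: "u \<in> carrier R" "\<forall>g\<in>G. u \<odot>\<^bsub>M\<^esub> g = \<zero>\<^bsub>M\<^esub>" for u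
  proof -
    have fu: "f u \<in> carrier S" using ring_hom_closed[OF h(2) u(1)] .
    let ?N = "{x \<in> carrier F. f u \<odot>\<^bsub>F\<^esub> x = \<zero>\<^bsub>F\<^esub>}"
    have "submodule ?N S F"
    proof (rule F.submoduleI)
      show "?N \<subseteq> carrier F" by blast
      show "\<zero>\<^bsub>F\<^esub> \<in> ?N" using fu by simp
      show "\<ominus>\<^bsub>F\<^esub> x \<in> ?N" if "x \<in> ?N" for x using that fu by (simp add: F.smult_r_minus)
      show "x \<oplus>\<^bsub>F\<^esub> y \<in> ?N" if "x \<in> ?N" "y \<in> ?N" for x y using that fu by (simp add: F.smult_r_distr)
      show "a \<odot>\<^bsub>F\<^esub> x \<in> ?N" if ax: "a \<in> carrier S" "x \<in> ?N" for a x
      proof -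
        have xc: "x \<in> carrier F" "f u \<odot>\<^bsub>F\<^esub> x = \<zero>\<^bsub>F\<^esub>" using ax(2) by simp_all
        have "f u \<odot>\<^bsub>F\<^esub> (a \<odot>\<^bsub>F\<^esub> x) = (f u \<otimes>\<^bsub>S\<^esub> a) \<odot>\<^bsub>F\<^esub> x" using F.smult_assoc1[OF fu ax(1) xc(1)] by simp
        also have "\<dots> = (a \<otimes>\<^bsub>S\<^esub> f u) \<odot>\<^bsub>F\<^esub> x" using F.R.m_comm ax(1) fu by simp
        also have "\<dots> = a \<odot>\<^bsub>F\<^esub> (f u \<odot>\<^bsub>F\<^esub> x)" using F.smult_assoc1[OF ax(1) fu xc(1)] .
        also have "\<dots> = \<zero>\<^bsub>F\<^esub>" using xc(2) ax(1) by simp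
        finally show ?thesis using ax(1) xc(1) by simp
      qed
    qed
    moreover have "G \<subseteq> ?N"
    proof
      fix g assume g: "g \<in> G"
      then have gc: "g \<in> carrier F" "g \<in> carrier M" using G(2) h(5) by blast+
      have "f u \<odot>\<^bsub>F\<^esub> g = u \<odot>\<^bsub>M\<^esub> g" using h(8) u(1) gc(2) by simp
      also have "\<dots> = \<zero>\<^bsub>F\<^esub>" using u(2) g h(7) by simp
      finally show "g \<in> ?N" using gc(1) by simp
    qed
    ultimately have N: "?N = carrier F" using G(3) by blast
    show ?thesis
    proof
      fix x assume x: "x \<in> carrier M"
      then have "x \<in> ?N" using N h(5) by simp
      then have "f u \<odot>\<^bsub>F\<^esub> x = \<zero>\<^bsub>F\<^esub>" by simp
      then show "u \<odot>\<^bsub>M\<^esub> x = \<zero>\<^bsub>M\<^esub>" using h(8) u(1) x h(7) by simp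
    qed
  qed
  moreover have "G \<subseteq> carrier M" using G(2) h(5) by simp
  ultimately show ?thesis unfolding ctrl_def using G(1) by blast
qed

end

theorem proposition2p11:
  fixes R :: "'a ring" and E :: "('a, 'm) module"
  assumes "cring R" and "Module.module R E"
  shows
    "(zariski_closed R (Supp R E) \<longrightarrow> pro_constructible TYPE('a set) R (Supp R E))
   \<and> (pro_constructible TYPE('b) R (Supp R E) \<longrightarrow> zariski_closed R (Supp R E))
   \<and> (finite (Supp R E) \<longrightarrow> zariski_closed R (Supp R E))
   \<and> (compactin (flat_topology R) (Ass R E) \<longrightarrow> zariski_closed R (Supp R E))
   \<and> (pro_constructible TYPE('c) R (Ass R E) \<longrightarrow> compactin (flat_topology R) (Ass R E))
   \<and> (finite (Ass R E) \<longrightarrow> compactin (flat_topology R) (Ass R E))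
   \<and> (closedin (flat_topology R) (Ass R E) \<longrightarrow> compactin (flat_topology R) (Ass R E))
   \<and> (finite_length R E \<longrightarrow> zariski_closed R (Supp R E))
   \<and> (afg TYPE('s) R E \<longrightarrow>
        zariski_closed R (Supp R E) \<and>
        VV R (Obs R E) = Supp R E \<and> Supp R E = VV R (ann R E) \<and>
        Obs R E = radical R (ann R E))"
proof -
  interpret E: Module.module R E by (rule assms(2))
  have A1: "zariski_closed R (Supp R E) \<longrightarrow> pro_constructible TYPE('a set) R (Supp R E)"
    using cring.closed_proconstructible[OF assms(1)] by blast
  have A2: "pro_constructible TYPE('b) R (Supp R E) \<longrightarrow> zariski_closed R (Supp R E)"
  proof
    assume "pro_constructible TYPE('b) R (Supp R E)"
    then obtain T :: "'b ring" and f where "cring T" "f \<in> ring_hom R T" "Supp R E = spec_image R T f"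
      unfolding pro_constructible_def by blast
    then show "zariski_closed R (Supp R E)" using E.image_Supp_closed by blast
  qed
  have A3: "finite (Supp R E) \<longrightarrow> zariski_closed R (Supp R E)"
    using E.finite_Supp_closed by blast
  have A4: "compactin (flat_topology R) (Ass R E) \<longrightarrow> zariski_closed R (Supp R E)"
    using E.Ass_compact_closed by blast
  have A5: "pro_constructible TYPE('c) R (Ass R E) \<longrightarrow> compactin (flat_topology R) (Ass R E)"
  proof
    assume "pro_constructible TYPE('c) R (Ass R E)"
    then obtain T :: "'c ring" and f where T: "cring T" "f \<in> ring_hom R T" "Ass R E = spec_image R T f"
      unfolding pro_constructible_def by blast
    have "spec_image R T f \<subseteq> Spec R" using E.Ass_Spec T(3) by simp
    then have "compactin (flat_topology R) (spec_image R T f)"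
      using cring.spec_image_compact[OF assms(1) T(1)] by blast
    then show "compactin (flat_topology R) (Ass R E)" using T(3) by simp
  qed
  have top: "topspace (flat_topology R) = Spec R" using cring.flat_topspace[OF assms(1)] .
  have A6: "finite (Ass R E) \<longrightarrow> compactin (flat_topology R) (Ass R E)"
    using finite_imp_compactin[of "Ass R E" "flat_topology R"] E.Ass_Spec top by simp
  have A7: "closedin (flat_topology R) (Ass R E) \<longrightarrow> compactin (flat_topology R) (Ass R E)"
    using closedin_compact_space[OF cring.Spec_compact[OF assms(1)]] by blast
  have zc: "zariski_closed R (Supp R E)" if "ctrl R E"
    unfolding zariski_closed_def using E.ctrl_Supp[OF that] E.ann_ideal by blast
  have A8: "finite_length R E \<longrightarrow> zariski_closed R (Supp R E)"
    using zc E.fin_gen_ctrl E.fl_fin_gen by blast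
  have A9: "afg TYPE('s) R E \<longrightarrow>
        zariski_closed R (Supp R E) \<and>
        VV R (Obs R E) = Supp R E \<and> Supp R E = VV R (ann R E) \<and>
        Obs R E = radical R (ann R E)"
  proof
    assume "afg TYPE('s) R E"
    then have c: "ctrl R E" by (rule E.afg_ctrl)
    have s: "Supp R E = VV R (ann R E)" using E.ctrl_Supp[OF c] .
    have o: "Obs R E = radical R (ann R E)" using E.ctrl_Obs[OF c] .
    have "ann R E \<subseteq> carrier R" unfolding ann_def by blast
    then have "VV R (Obs R E) = Supp R E" using o s cring.VV_radical[OF assms(1)] by simp
    then show "zariski_closed R (Supp R E) \<and>
        VV R (Obs R E) = Supp R E \<and> Supp R E = VV R (ann R E) \<and>
        Obs R E = radical R (ann R E)" using zc[OF c] s o by blast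
  qed
  show ?thesis using A1 A2 A3 A4 A5 A6 A7 A8 A9 by blast
qed

end
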